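(* There is an absolute constant $C$ such that for every local type $\mathcal T$ with encoding dimension $d$, the function $\mathrm{nearest\_left2}$ mapping a sequence $x\in\mathrm{Option}\langle\mathcal T\rangle^*$ to the sequence whose $p$-th entry is the pair consisting of the nearest and the second-nearest non-None entries strictly to the left of $p$ (each entry None if it does not exist), and likewise $\mathrm{nearest\_right2}$ (strictly to the right), are representable in $\mathrm{TF}(C(d+1),C,C)$; i.e. in $\mathrm{TF}(O(d),O(1),O(1))$.
   Context: A local type $\mathcal T$ is a finite set $S$ with an injective encoding $\phi_{\mathcal T}:S\to\mathbb{R}^{d}$. $\mathrm{Option}\langle\mathcal T\rangle$ has elements $\mathrm{Some}(t)$ and $\mathrm{None}$, encoded in $\mathbb{R}^{d+1}$ by $\mathrm{Some}(t)\mapsto(1,\phi_{\mathcal T}(t))$, $\mathrm{None}\mapsto0$; pairs are encoded by concatenation. Hard-attention transformer: attention layer $f_{\mathrm{attn}}(X)_p=W_O\,\mathrm{Concat}_h(\mathrm{Attn}^{(h)}(X)_p)$, $\mathrm{Attn}^{(h)}(X)_p=\frac1{|S_p|}\sum_{p'\in S_p}V^{(h)}_{p'}$, $S_p=\arg\max_{p'}\big(Q^{(h)\top}_pK^{(h)}_{p'}+\lambda^{(h)\top}\Psi_{p'-p}\big)$, with $Q,K,V$ linear in $X_p$, $\lambda^{(h)}\in\mathbb{R}^2$, $\Psi_q=(q,\mathbf 1_{q>0})^\top$; feed-forward layer $X_p\mapsto W_2\mathrm{ReLU}(W_1X_p+B_1)+B_2$ with hidden width $4d_{\mathrm{model}}$;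 layers $\hat X^{(l)}=X^{(l-1)}+f^{(l)}_{\mathrm{attn}}(X^{(l-1)})$, $X^{(l)}=\hat X^{(l)}+f^{(l)}_{\mathrm{ffn}}(\hat X^{(l)})$. $\mathrm{TF}(d_{\mathrm{model}},H,L)$ is the set of such transformers with model dimension $d_{\mathrm{model}}$, $H$ heads and $L$ layers (input sequences preceded by a distinguished starter token). A length-preserving $f:\mathcal A^*\to\mathcal B^*$ is representable in $\mathrm{TF}(d_{\mathrm{model}},H,L)$ if some transformer $F$ in the class satisfies $F((\iota\phi_{\mathcal A}(x_p))_p)_p=\iota\phi_{\mathcal B}(f(x)_p)$ for every sequence $x$ and position $p$, $\iota$ being zero-padding. *)

theory Defs
  imports Complex_Main
begin

type_synonym vec = "real list"
type_synonym mat = "real list list"  \<comment> \<open>list of rows\<close>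

definition is_mat :: "nat \<Rightarrow> nat \<Rightarrow> mat \<Rightarrow> bool" where
  "is_mat m n A \<longleftrightarrow> length A = m \<and> (\<forall>r\<in>set A. length r = n)"

definition dot :: "vec \<Rightarrow> vec \<Rightarrow> real" where
  "dot x y = sum_list (map2 (*) x y)"

definition mv :: "mat \<Rightarrow> vec \<Rightarrow> vec" where
  "mv A x = map (\<lambda>r. dot r x) A"

definition vadd :: "vec \<Rightarrow> vec \<Rightarrow> vec" where
  "vadd x y = map2 (+) x y"

record head =
  WQ :: mat
  WK :: mat
  WV :: mat
  lam :: "real \<times> real"

record layer =
  heads :: "head list"
  WO :: mat
  W1 :: mat
  B1 :: vec
  W2 :: mat
  B2 :: vec

record transformer =
  start :: vec          \<comment> \<open>encoding of the distinguished starter token\<close>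
  layers :: "layer list"

definition wf_head :: "nat \<Rightarrow> head \<Rightarrow> bool" where
  "wf_head dm h \<longleftrightarrow> is_mat dm dm (WQ h) \<and> is_mat dm dm (WK h) \<and> is_mat dm dm (WV h)"

definition wf_layer :: "nat \<Rightarrow> nat \<Rightarrow> layer \<Rightarrow> bool" where
  "wf_layer dm H l \<longleftrightarrow> length (heads l) = H \<and> (\<forall>h\<in>set (heads l). wf_head dm h)
     \<and> is_mat dm (H * dm) (WO l)
     \<and> is_mat (4 * dm) dm (W1 l) \<and> length (B1 l) = 4 * dm
     \<and> is_mat dm (4 * dm) (W2 l) \<and> length (B2 l) = dm"

definition TF :: "nat \<Rightarrow> nat \<Rightarrow> nat \<Rightarrow> transformer set" where
  "TF dm H L = {F. length (start F) = dm \<and> length (layers F) = L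
                  \<and> (\<forall>l\<in>set (layers F). wf_layer dm H l)}"

definition score :: "head \<Rightarrow> vec list \<Rightarrow> nat \<Rightarrow> nat \<Rightarrow> real" where
  "score h X p p' = dot (mv (WQ h) (X ! p)) (mv (WK h) (X ! p'))
      + fst (lam h) * (real p' - real p) + snd (lam h) * (if p' > p then 1 else 0)"

definition argmax_set :: "head \<Rightarrow> vec list \<Rightarrow> nat \<Rightarrow> nat set" where
  "argmax_set h X p = {p'. p' < length X \<and> (\<forall>q<length X. score h X p q \<le> score h X p p')}"

definition attn_head :: "head \<Rightarrow> vec list \<Rightarrow> nat \<Rightarrow> vec" where
  "attn_head h X p = map (\<lambda>i. (\<Sum>p'\<in>argmax_set h X p. mv (WV h) (X ! p') ! i)
                                 / real (card (argmax_set h X p))) [0..<length (WV h)]"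

definition f_attn :: "layer \<Rightarrow> vec list \<Rightarrow> nat \<Rightarrow> vec" where
  "f_attn l X p = mv (WO l) (concat (map (\<lambda>h. attn_head h X p) (heads l)))"

definition f_ffn :: "layer \<Rightarrow> vec \<Rightarrow> vec" where
  "f_ffn l x = vadd (mv (W2 l) (map (\<lambda>z. max 0 z) (vadd (mv (W1 l) x) (B1 l)))) (B2 l)"

definition apply_layer :: "layer \<Rightarrow> vec list \<Rightarrow> vec list" where
  "apply_layer l X =
     (let Xh = map (\<lambda>p. vadd (X ! p) (f_attn l X p)) [0..<length X]
      in map (\<lambda>x. vadd x (f_ffn l x)) Xh)"

text \<open>Run the transformer on an input sequence preceded by the starter token;
  position 0 of the result is the starter token.\<close>
definition run_tf :: "transformer \<Rightarrow> vec list \<Rightarrow> vec list" where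
  "run_tf F xs = fold apply_layer (layers F) (start F # xs)"

definition pad :: "nat \<Rightarrow> vec \<Rightarrow> vec" where
  "pad dm v = v @ replicate (dm - length v) 0"

definition representable ::
  "nat \<Rightarrow> nat \<Rightarrow> nat \<Rightarrow> 'a set \<Rightarrow> ('a \<Rightarrow> vec) \<Rightarrow> ('b \<Rightarrow> vec) \<Rightarrow> ('a list \<Rightarrow> 'b list) \<Rightarrow> bool" where
  "representable dm H L A encA encB f \<longleftrightarrow>
     (\<exists>F\<in>TF dm H L. \<forall>xs. set xs \<subseteq> A \<longrightarrow>
        (\<forall>p<length xs. run_tf F (map (\<lambda>a. pad dm (encA a)) xs) ! Suc p = pad dm (encB (f xs ! p))))"

text \<open>A local type: finite set S (w.l.o.g. of naturals) with injective encoding into R^d.\<close>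
definition local_type :: "nat set \<Rightarrow> nat \<Rightarrow> (nat \<Rightarrow> vec) \<Rightarrow> bool" where
  "local_type S d \<phi> \<longleftrightarrow> finite S \<and> inj_on \<phi> S \<and> (\<forall>t\<in>S. length (\<phi> t) = d)"

definition opt_set :: "'a set \<Rightarrow> 'a option set" where
  "opt_set S = insert None (Some ` S)"

definition enc_opt :: "nat \<Rightarrow> ('a \<Rightarrow> vec) \<Rightarrow> 'a option \<Rightarrow> vec" where
  "enc_opt d \<phi> u = (case u of None \<Rightarrow> replicate (Suc d) 0 | Some t \<Rightarrow> 1 # \<phi> t)"

definition enc_pair :: "('a \<Rightarrow> vec) \<Rightarrow> ('b \<Rightarrow> vec) \<Rightarrow> 'a \<times> 'b \<Rightarrow> vec" where
  "enc_pair e1 e2 ab = e1 (fst ab) @ e2 (snd ab)"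

definition nth_or_none :: "'a option list \<Rightarrow> nat \<Rightarrow> 'a option" where
  "nth_or_none L i = (if i < length L then L ! i else None)"

text \<open>L lists the non-None entries ordered by distance from p (nearest first).\<close>
definition nearest_left2 :: "'a option list \<Rightarrow> ('a option \<times> 'a option) list" where
  "nearest_left2 xs = map (\<lambda>p. let L = rev (filter (\<lambda>u. u \<noteq> None) (take p xs))
                                 in (nth_or_none L 0, nth_or_none L 1)) [0..<length xs]"

definition nearest_right2 :: "'a option list \<Rightarrow> ('a option \<times> 'a option) list" where
  "nearest_right2 xs = map (\<lambda>p. let L = filter (\<lambda>u. u \<noteq> None) (drop (Suc p) xs)
                                 in (nth_or_none L 0, nth_or_none L 1)) [0..<length xs]"

end

theory Submission
  imports Defs
begin

definition vec_of :: "nat \<Rightarrow> (nat \<Rightarrow> real) \<Rightarrow> vec" where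
  "vec_of n f = map f [0..<n]"
definition mat_of :: "nat \<Rightarrow> nat \<Rightarrow> (nat \<Rightarrow> nat \<Rightarrow> real) \<Rightarrow> mat" where
  "mat_of m n F = map (\<lambda>i. map (F i) [0..<n]) [0..<m]"

lemma length_vec_of[simp]: "length (vec_of n f) = n" by (simp add: vec_of_def)
lemma nth_vec_of[simp]: "i < n \<Longrightarrow> vec_of n f ! i = f i" by (simp add: vec_of_def)
lemma is_mat_mat_of[simp]: "is_mat m n (mat_of m n F)" by (auto simp: is_mat_def mat_of_def)
lemma length_mat_of[simp]: "length (mat_of m n F) = m" by (simp add: mat_of_def)

lemma vec_of_cong: "(\<And>i. i < n \<Longrightarrow> f i = g i) \<Longrightarrow> vec_of n f = vec_of n g"
  by (simp add: vec_of_def)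

lemma vec_of_nth: "length x = n \<Longrightarrow> vec_of n (\<lambda>i. x ! i) = x"
  by (auto simp: vec_of_def intro: nth_equalityI)

lemma dot_vec_of: "dot (vec_of n f) (vec_of n g) = (\<Sum>j<n. f j * g j)"
proof -
  have "zip (map f [0..<n]) (map g [0..<n]) = map (\<lambda>j. (f j, g j)) [0..<n]"
    by (simp add: zip_map_map zip_same_conv_map comp_def)
  then show ?thesis
    by (simp add: dot_def vec_of_def sum_list_map_eq_sum_count atLeast0LessThan[symmetric] 
          sum_set_upt_conv_sum_list_nat[symmetric] comp_def)
qed

lemma mv_mat_of: "length x = n \<Longrightarrow> mv (mat_of m n F) x = vec_of m (\<lambda>i. \<Sum>j<n. F i j * x ! j)"
proof -
  assume "length x = n"
  then have x: "x = vec_of n (\<lambda>j. x ! j)" by (simp add: vec_of_nth)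
  show ?thesis unfolding mv_def mat_of_def vec_of_def
    apply (subst x) 
    using dot_vec_of[of n] by (simp add: vec_of_def)
qed

lemma vadd_vec_of: "vadd (vec_of n f) (vec_of n g) = vec_of n (\<lambda>i. f i + g i)"
  by (simp add: vadd_def vec_of_def zip_map_map zip_same_conv_map comp_def)


definition aa :: "nat \<Rightarrow> real" where "aa i = 1 / (real i + 1)"

lemma aa_pos: "0 < aa i" by (simp add: aa_def)
lemma aa_le1: "aa i \<le> 1" by (simp add: aa_def)
lemma aa_less: "i < j \<Longrightarrow> aa j < aa i" by (simp add: aa_def frac_less2)
lemma aa_0[simp]: "aa 0 = 1" by (simp add: aa_def)
lemma aa_le_half: "0 < i \<Longrightarrow> aa i \<le> 1/2" by (simp add: aa_def)

lemma key_ineq: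
  fixes m x :: nat
  assumes "1 \<le> m" "1 \<le> x" "x \<noteq> m"
  shows "1/((real m+1)*real x) - (1/2 + 1/(4*(real m+1)))/(real x*(real x+1))
       < 1/((real m+1)*real m) - (1/2 + 1/(4*(real m+1)))/(real m*(real m+1))"
proof -
  define M where "M = real m"
  define X where "X = real x"
  have M1: "M \<ge> 1" and X1: "X \<ge> 1" using assms by (simp_all add: M_def X_def)
  have fac: "(2*M+1)*X*(X+1) - (4*X+1-2*M)*M*(M+1) = (X-M)*((2*M+1)*X - (2*M-1)*(M+1))"
    by (simp add: algebra_simps)
  have pos: "(X-M)*((2*M+1)*X - (2*M-1)*(M+1)) > 0"
  proof (cases "x > m")
    case True
    then have "X \<ge> M + 1" by (simp add: X_def M_def)
    then have "(2*M+1)*X \<ge> (2*M+1)*(M+1)" using M1 by (intro mult_left_mono) auto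
    then have "(2*M+1)*X - (2*M-1)*(M+1) > 0" using M1 by (simp add: algebra_simps)
    moreover have "X - M > 0" using \<open>X \<ge> M+1\<close> by simp
    ultimately show ?thesis by simp
  next
    case False
    then have "x + 1 \<le> m" using assms by simp
    then have "X \<le> M - 1" by (simp add: X_def M_def)
    then have "(2*M+1)*X \<le> (2*M+1)*(M-1)" using M1 by (intro mult_left_mono) auto
    then have "(2*M+1)*X - (2*M-1)*(M+1) < 0" using M1 by (simp add: algebra_simps)
    moreover have "X - M < 0" using \<open>X \<le> M - 1\<close> by simp
    ultimately show ?thesis by (simp add: mult_neg_neg)
  qed
  have eq: "(1/((M+1)*M) - (1/2 + 1/(4*(M+1)))/(M*(M+1))) - (1/((M+1)*X) - (1/2 + 1/(4*(M+1)))/(X*(X+1)))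
     = ((2*M+1)*X*(X+1) - (4*X+1-2*M)*M*(M+1)) / (4*(M+1)*(M+1)*M*X*(X+1))"
  proof -
    have "M \<noteq> 0" "M + 1 \<noteq> 0" "X \<noteq> 0" "X + 1 \<noteq> 0" using M1 X1 by auto
    then show ?thesis using M1 X1 by (simp add: divide_simps) (simp add: algebra_simps)
  qed
  have "((2*M+1)*X*(X+1) - (4*X+1-2*M)*M*(M+1)) / (4*(M+1)*(M+1)*M*X*(X+1)) > 0"
    using pos fac M1 X1 by (intro divide_pos_pos) auto
  then show ?thesis using eq unfolding M_def[symmetric] X_def[symmetric] by linarith
qed

lemma key_ineq0:
  fixes x :: nat
  assumes "2 \<le> x"
  shows "1/real x - (3/4)/(real x*(real x+1)) < 5/8"
proof -
  define X where "X = real x"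
  have X2: "X \<ge> 2" using assms by (simp add: X_def)
  have eq: "5/8 - (1/X - (3/4)/(X*(X+1))) = (5*X*X - 3*X - 2)/(8*X*(X+1))"
  proof -
    have "X \<noteq> 0" "X + 1 \<noteq> 0" using X2 by auto
    then show ?thesis using X2 by (simp add: divide_simps) (simp add: algebra_simps)
  qed
  have "5*X*X - 3*X - 2 = (5*X+2)*(X-1)" by (simp add: algebra_simps)
  also have "\<dots> > 0" using X2 by (intro mult_pos_pos) auto
  finally have "(5*X*X - 3*X - 2)/(8*X*(X+1)) > 0" using X2 by (intro divide_pos_pos) auto
  then show ?thesis using eq unfolding X_def[symmetric] by linarith
qed


definition nxt :: "nat \<Rightarrow> nat \<Rightarrow> nat" where "nxt n p = (if Suc p < n then Suc p else 0)"

lemma nxt_lt: "0 < n \<Longrightarrow> nxt n p < n" by (simp add: nxt_def)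

lemma nxt_max:
  assumes "p < n" "q < n" "q \<noteq> nxt n p"
  shows "aa q + 2 * (if q > p then 1 else 0) < aa (nxt n p) + 2 * (if nxt n p > p then 1 else 0)"
proof (cases "Suc p < n")
  case True
  then have nx: "nxt n p = Suc p" by (simp add: nxt_def)
  show ?thesis
  proof (cases "q > p")
    case True
    then have "Suc p < q" using assms nx by auto
    then show ?thesis using nx True aa_less[of "Suc p" q] by simp
  next
    case False
    then show ?thesis using nx aa_le1[of q] aa_pos[of "Suc p"] by simp
  qed
next
  case False
  then have nx: "nxt n p = 0" by (simp add: nxt_def)
  then have "q \<noteq> 0" "\<not> q > p" using assms False by auto
  then show ?thesis using nx aa_less[of 0 q] by simp
qed

definition scP :: "nat \<Rightarrow> nat \<Rightarrow> nat \<Rightarrow> real" where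
  "scP n p q = aa p * aa q + (1/2 + aa p/4) * (- aa q + aa (nxt n q) - 2 * (if Suc q < n then 0 else 1))"

lemma scP_reg: "Suc q < n \<Longrightarrow> scP n p q = 1/((real p+1)*(real (Suc q))) - (1/2 + 1/(4*(real p+1)))/(real (Suc q)*(real (Suc q)+1))"
  by (simp add: scP_def nxt_def aa_def divide_simps) (simp add: algebra_simps)

lemma scP_last: "\<not> Suc q < n \<Longrightarrow> scP n p q < 0"
proof -
  assume "\<not> Suc q < n"
  then have e: "scP n p q = aa p * aa q + (1/2 + aa p/4) * (- aa q - 1)" by (simp add: scP_def nxt_def)
  have e2: "scP n p q = aa q * (3 * aa p / 4 - 1/2) - 1/2 - aa p / 4" using e by (simp add: field_simps)
  show ?thesis
  proof (cases "3 * aa p / 4 - 1/2 \<ge> 0")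
    case True
    have "aa q * (3 * aa p / 4 - 1/2) \<le> 1 * (3 * aa p / 4 - 1/2)"
      using aa_le1[of q] True by (intro mult_right_mono) auto
    then have "scP n p q \<le> aa p / 2 - 1" using e2 by simp
    then show ?thesis using aa_le1[of p] by simp
  next
    case False
    then have "aa q * (3 * aa p / 4 - 1/2) \<le> 0"
      using aa_pos[of q] by (intro mult_nonneg_nonpos) auto
    then have "scP n p q \<le> - 1/2 - aa p / 4" using e2 by simp
    then show ?thesis using aa_pos[of p] by simp
  qed
qed

lemma prev_max:
  assumes "p < n" "q < n" "q \<noteq> p - 1"
  shows "scP n p q < scP n p (p - 1)"
proof -
  have tgt_reg: "Suc (p - 1) < n"
  proof (cases p)
    case 0
    then have "q \<noteq> 0" using assms by simp
    then show ?thesis using assms 0 by simp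
  qed (use assms in simp)
  have tpos: "scP n p (p - 1) > 0"
  proof (cases p)
    case 0
    then show ?thesis using tgt_reg by (simp add: scP_def nxt_def aa_def)
  next
    case (Suc m)
    have "scP n p (p - 1) = 1/((real p+1)*real p) - (1/2 + 1/(4*(real p+1)))/(real p*(real p+1))"
      using scP_reg[OF tgt_reg, of p] Suc by simp
    also have "\<dots> = (1/2 - 1/(4*(real p+1)))/(real p*(real p+1))"
      by (simp add: divide_simps)
    also have "\<dots> > 0" using Suc by (intro divide_pos_pos) (simp_all add: divide_simps)
    finally show ?thesis .
  qed
  show ?thesis
  proof (cases "Suc q < n")
    case False
    then show ?thesis using scP_last[OF False, of p] tpos by linarith
  next
    case True
    show ?thesis
    proof (cases p)
      case 0
      then have q: "2 \<le> Suc q" using assms by simp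
      have "scP n p q = 1/real (Suc q) - (3/4)/(real (Suc q)*(real (Suc q)+1))"
        using scP_reg[OF True, of p] 0 by simp
      also have "\<dots> < 5/8" by (rule key_ineq0[OF q])
      also have "5/8 = scP n p (p - 1)" using 0 tgt_reg by (simp add: scP_def nxt_def aa_def)
      finally show ?thesis .
    next
      case (Suc m)
      have ne: "Suc q \<noteq> p" using assms Suc by simp
      have "scP n p q = 1/((real p+1)*real (Suc q)) - (1/2 + 1/(4*(real p+1)))/(real (Suc q)*(real (Suc q)+1))"
        using scP_reg[OF True, of p] by simp
      also have "\<dots> < 1/((real p+1)*real p) - (1/2 + 1/(4*(real p+1)))/(real p*(real p+1))"
        by (rule key_ineq) (use Suc ne in auto)
      also have "\<dots> = scP n p (p - 1)"
        using scP_reg[OF tgt_reg, of p] Suc by simp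
      finally show ?thesis .
    qed
  qed
qed

definition Jf :: "(nat \<Rightarrow> real) \<Rightarrow> nat \<Rightarrow> nat" where
  "Jf c p = (if \<exists>j\<le>p. c j = 1 then GREATEST j. j \<le> p \<and> c j = 1 else p)"

lemma Jf_props:
  assumes "\<exists>j\<le>p. c j = 1"
  shows "Jf c p \<le> p" "c (Jf c p) = 1" "\<And>j. j \<le> p \<Longrightarrow> c j = 1 \<Longrightarrow> j \<le> Jf c p"
proof -
  obtain j where j: "j \<le> p" "c j = 1" using assms by blast
  have b: "\<forall>y. y \<le> p \<and> c y = 1 \<longrightarrow> y \<le> p" by blast
  have "(GREATEST j. j \<le> p \<and> c j = 1) \<le> p \<and> c (GREATEST j. j \<le> p \<and> c j = 1) = 1"
    using GreatestI_nat[of "\<lambda>j. j \<le> p \<and> c j = 1" j p] j by blast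
  then show "Jf c p \<le> p" "c (Jf c p) = 1" using assms by (simp_all add: Jf_def)
  show "\<And>i. i \<le> p \<Longrightarrow> c i = 1 \<Longrightarrow> i \<le> Jf c p"
    using assms Greatest_le_nat[of "\<lambda>j. j \<le> p \<and> c j = 1" _ p] by (simp add: Jf_def)
qed

lemma Jf_le: "Jf c p \<le> p"
proof (cases "\<exists>j\<le>p. c j = 1")
  case True then show ?thesis by (rule Jf_props(1))
qed (auto simp: Jf_def)

lemma J_max:
  assumes "\<And>q. c q = 0 \<or> c q = 1" "q \<noteq> Jf c p"
  shows "- aa q + 3 * c q - 10 * (if q > p then 1 else 0) < - aa (Jf c p) + 3 * c (Jf c p) - 10 * (if Jf c p > p then 1 else 0)"
proof (cases "\<exists>j\<le>p. c j = 1")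
  case True
  note J = Jf_props[OF True]
  show ?thesis
  proof (cases "q > p")
    case True
    then show ?thesis using J assms(1)[of q] aa_pos[of q] aa_le1[of "Jf c p"] by auto
  next
    case False
    show ?thesis
    proof (cases "c q = 1")
      case True
      then have "q < Jf c p" using J(3)[of q] False assms(2) by simp
      then show ?thesis using aa_less[of q "Jf c p"] True J False by simp
    next
      case c0: False
      then have "c q = 0" using assms(1)[of q] by auto
      then show ?thesis using J False aa_pos[of q] aa_le1[of "Jf c p"] by auto
    qed
  qed
next
  case False
  then have jp: "Jf c p = p" by (auto simp: Jf_def)
  have cp: "c p = 0" using False assms(1)[of p] by auto
  show ?thesis
  proof (cases "q > p")
    case True
    then show ?thesis using jp cp assms(1)[of q] aa_pos[of q] aa_le1[of p] by auto
  next
    case qp: False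
    then have "q < p" using jp assms(2) by simp
    moreover have "c q = 0" using False assms(1)[of q] qp by auto
    ultimately show ?thesis using jp cp aa_less[of q p] by simp
  qed
qed

definition Kf :: "(nat \<Rightarrow> real) \<Rightarrow> nat \<Rightarrow> nat \<Rightarrow> nat" where
  "Kf b n p = (if p = 0 then 0 else if \<exists>j. p < j \<and> j < n \<and> b j = 1 then LEAST j. p < j \<and> j < n \<and> b j = 1
      else if Suc p < n then Suc p else 0)"

lemma Kf_props:
  assumes "\<exists>j. p < j \<and> j < n \<and> b j = 1" "p \<noteq> 0"
  shows "p < Kf b n p" "Kf b n p < n" "b (Kf b n p) = 1" "\<And>j. p < j \<Longrightarrow> j < n \<Longrightarrow> b j = 1 \<Longrightarrow> Kf b n p \<le> j"
proof -
  have k: "Kf b n p = (LEAST j. p < j \<and> j < n \<and> b j = 1)" using assms by (simp add: Kf_def)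
  obtain j where "p < j \<and> j < n \<and> b j = 1" using assms by blast
  then have "p < Kf b n p \<and> Kf b n p < n \<and> b (Kf b n p) = 1" unfolding k by (rule LeastI)
  then show "p < Kf b n p" "Kf b n p < n" "b (Kf b n p) = 1" by auto
  show "\<And>j. p < j \<Longrightarrow> j < n \<Longrightarrow> b j = 1 \<Longrightarrow> Kf b n p \<le> j" unfolding k by (rule Least_le) auto
qed

lemma Kf_lt: "p < n \<Longrightarrow> Kf b n p < n"
  using Kf_props(2)[of p n b] by (auto simp: Kf_def)

lemma K_max:
  assumes "\<And>q. b q = 0 \<or> b q = 1" "b 0 = 0" "p < n" "q < n" "q \<noteq> Kf b n p"
  shows "aa q + 3 * b q + 5 * (if q = 0 then 1 else 0) + 100 * ((if p = 0 then 1 else 0) * (if q = 0 then 1 else 0))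
           + 10 * (if q > p then 1 else 0)
        < aa (Kf b n p) + 3 * b (Kf b n p) + 5 * (if Kf b n p = 0 then 1 else 0)
           + 100 * ((if p = 0 then 1 else 0) * (if Kf b n p = 0 then 1 else 0)) + 10 * (if Kf b n p > p then 1 else 0)"
proof (cases "p = 0")
  case True
  then have "Kf b n p = 0" by (simp add: Kf_def)
  then show ?thesis using True assms(1)[of q] assms(2) assms(5) aa_le1[of q] by auto
next
  case pn0: False
  show ?thesis
  proof (cases "\<exists>j. p < j \<and> j < n \<and> b j = 1")
    case True
    note K = Kf_props[OF True pn0]
    show ?thesis
    proof (cases "p < q \<and> b q = 1")
      case True
      then have "Kf b n p < q" using K(4)[of q] assms(4,5) by force
      then show ?thesis using True K aa_less[of "Kf b n p" q] pn0 by auto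
    next
      case False
      have "q > p \<Longrightarrow> b q = 0" using False assms(1)[of q] by auto
      then show ?thesis using K pn0 assms(1)[of q] aa_le1[of q] aa_pos[of "Kf b n p"] 
        by (cases "q > p"; cases "q = 0") (auto simp: assms(2))
    qed
  next
    case False
    then have bq: "\<And>j. j > p \<Longrightarrow> j < n \<Longrightarrow> b j = 0" using assms(1) by blast
    show ?thesis
    proof (cases "Suc p < n")
      case True
      then have k: "Kf b n p = Suc p" using False pn0 by (auto simp: Kf_def)
      have bs: "b (Suc p) = 0" using bq[of "Suc p"] True by simp
      show ?thesis
      proof (cases "q > p")
        case True
        then have "Suc p < q" using k assms(5) by auto
        then show ?thesis using k bs bq[of q] assms(4) True aa_less[of "Suc p" q] pn0 by simp
      next
        case qp: False
        then show ?thesis using k bs pn0 assms(1)[of q] aa_le1[of q] aa_pos[of "Suc p"]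
          by (cases "q = 0") (auto simp: assms(2))
      qed
    next
      case ns: False
      then have k: "Kf b n p = 0" using False pn0 by (auto simp: Kf_def)
      have "\<not> q > p" using ns assms(4) by auto
      then show ?thesis using k pn0 assms(1)[of q] assms(2) assms(5) aa_le1[of q] by auto
    qed
  qed
qed


lemma sum_delta_mult[simp]: "c < (n::nat) \<Longrightarrow> (\<Sum>j<n. (if j = c then u else 0) * f j) = u * (f c :: real)"
proof -
  assume "c < n"
  have "(\<Sum>j<n. (if j = c then u else 0) * f j) = (\<Sum>j<n. if j = c then u * f j else 0)"
    by (rule sum.cong) auto
  also have "\<dots> = u * f c" using \<open>c < n\<close> by (subst sum.delta) auto
  finally show ?thesis .
qed

lemma sum_delta_mult2[simp]: "c < (n::nat) \<Longrightarrow> (\<Sum>j<n. f j * (if c = j then 1 else 0)) = (f c :: real)"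
proof -
  assume "c < n"
  have "(\<Sum>j<n. f j * (if c = j then 1 else 0)) = (\<Sum>j<n. if c = j then f j else 0)"
    by (rule sum.cong) auto
  also have "\<dots> = f c" using \<open>c < n\<close> by (subst sum.delta') auto
  finally show ?thesis .
qed

lemma sum_two: "2 \<le> (n::nat) \<Longrightarrow> (\<And>r. r \<ge> 2 \<Longrightarrow> g r = (0::real)) \<Longrightarrow> (\<Sum>r<n. g r) = g 0 + g 1"
proof -
  assume a: "2 \<le> n" "\<And>r. r \<ge> 2 \<Longrightarrow> g r = (0::real)"
  have "(\<Sum>r<n. g r) = (\<Sum>r\<in>{0,1}. g r)"
    apply (rule sum.mono_neutral_right)
    using a by auto
  then show ?thesis by simp
qed

lemma sum_split3: "(\<Sum>r<4*m. g r) = (\<Sum>j<m. g j) + (\<Sum>j<m. g (m+j)) + (\<Sum>r\<in>{2*m..<4*m}. g (r::nat)) "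
proof -
  have a: "(\<Sum>r<4*m. g r) = (\<Sum>r\<in>{0..<m}. g r) + (\<Sum>r\<in>{m..<2*m}. g r) + (\<Sum>r\<in>{2*m..<4*m}. g r)"
    by (simp add: atLeast0LessThan[symmetric] sum.atLeastLessThan_concat)
  have b: "(\<Sum>r\<in>{m..<2*m}. g r) = (\<Sum>j<m. g (m+j))"
    using sum.shift_bounds_nat_ivl[of g 0 m m] by (simp add: atLeast0LessThan add.commute mult_2)
  show ?thesis using a b by (simp add: atLeast0LessThan)
qed

locale tfc = fixes d :: nat
begin

definition D :: nat where "D = Suc d"
definition dm :: nat where "dm = 11 * D"
lemma D_pos[simp]: "0 < D" by (simp add: D_def)
lemma dm_ge[simp]: "2 \<le> dm" by (simp add: dm_def D_def)

definition mk_head :: "(nat \<Rightarrow> real) \<Rightarrow> (nat \<Rightarrow> real) \<Rightarrow> (nat \<Rightarrow> real) \<Rightarrow> (nat \<Rightarrow> real)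
   \<Rightarrow> (nat \<Rightarrow> nat \<Rightarrow> real) \<Rightarrow> real \<times> real \<Rightarrow> head" where
  "mk_head \<alpha> \<beta> \<kappa> \<mu> vf lm = \<lparr>WQ = mat_of dm dm (\<lambda>r j. if r = 0 then \<alpha> j else if r = 1 then \<beta> j else 0),
     WK = mat_of dm dm (\<lambda>r j. if r = 0 then \<kappa> j else if r = 1 then \<mu> j else 0),
     WV = mat_of dm dm vf, lam = lm\<rparr>"

definition zh :: head where "zh = mk_head (\<lambda>_. 0) (\<lambda>_. 0) (\<lambda>_. 0) (\<lambda>_. 0) (\<lambda>_ _. 0) (0,0)"

definition WOsum :: mat where
  "WOsum = mat_of dm (11*dm) (\<lambda>r j. (if j = r then 1 else 0) + (if j = dm + r then 1 else 0))"

definition mk_layer :: "head \<Rightarrow> head \<Rightarrow> mat \<Rightarrow> mat \<Rightarrow> layer" where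
  "mk_layer h0 h1 A B = \<lparr>heads = [h0, h1] @ replicate 9 zh, WO = WOsum, W1 = A,
      B1 = replicate (4*dm) 0, W2 = B, B2 = replicate dm 0\<rparr>"

definition Z1 :: mat where "Z1 = mat_of (4*dm) dm (\<lambda>_ _. 0)"
definition Z2 :: mat where "Z2 = mat_of dm (4*dm) (\<lambda>_ _. 0)"
definition L1 :: mat where
  "L1 = mat_of (4*dm) dm (\<lambda>r j. if r < dm \<and> j = r then 1 else if dm \<le> r \<and> r < 2*dm \<and> j = r - dm then -1 else 0)"
definition L2 :: "(nat \<Rightarrow> nat \<Rightarrow> real) \<Rightarrow> mat" where
  "L2 M = mat_of dm (4*dm) (\<lambda>i r. if r < dm then M i r - (if i = r then 1 else 0)
       else if r < 2*dm then -(M i (r - dm) - (if i = r - dm then 1 else 0)) else 0)"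

lemma wf_mk_head: "wf_head dm (mk_head a b k m v l)"
  by (simp add: wf_head_def mk_head_def)
lemma wf_zh: "wf_head dm zh" by (simp add: zh_def wf_mk_head)

lemma wf_mk_layer: "wf_head dm h0 \<Longrightarrow> wf_head dm h1 \<Longrightarrow> is_mat (4*dm) dm A \<Longrightarrow> is_mat dm (4*dm) B
   \<Longrightarrow> wf_layer dm 11 (mk_layer h0 h1 A B)"
  by (auto simp: wf_layer_def mk_layer_def wf_zh WOsum_def)

lemma is_mat_Z1: "is_mat (4*dm) dm Z1" by (simp add: Z1_def)
lemma is_mat_Z2: "is_mat dm (4*dm) Z2" by (simp add: Z2_def)
lemma is_mat_L1: "is_mat (4*dm) dm L1" by (simp add: L1_def)
lemma is_mat_L2: "is_mat dm (4*dm) (L2 M)" by (simp add: L2_def)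

lemma length_WV_mk_head[simp]: "length (WV (mk_head a b k m v l)) = dm"
  by (simp add: mk_head_def)

lemma score_mk_head:
  assumes "length (X ! p) = dm" "length (X ! q) = dm"
  shows "score (mk_head \<alpha> \<beta> \<kappa> \<mu> vf lm) X p q =
     (\<Sum>j<dm. \<alpha> j * X!p!j) * (\<Sum>j<dm. \<kappa> j * X!q!j) + (\<Sum>j<dm. \<beta> j * X!p!j) * (\<Sum>j<dm. \<mu> j * X!q!j)
     + fst lm * (real q - real p) + snd lm * (if q > p then 1 else 0)"
proof -
  let ?f = "\<lambda>r::nat. (\<Sum>j<dm. (if r = 0 then \<alpha> j else if r = 1 then \<beta> j else 0) * X!p!j) *
                (\<Sum>j<dm. (if r = 0 then \<kappa> j else if r = 1 then \<mu> j else 0) * X!q!j)"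
  have "(\<Sum>r<dm. ?f r) = ?f 0 + ?f 1"
    using sum_two[of dm ?f] by simp
  then show ?thesis using assms
    by (simp add: score_def mk_head_def mv_mat_of dot_vec_of)
qed

lemma attn_head_mk_head:
  assumes "\<And>q. q < length X \<Longrightarrow> length (X ! q) = dm"
  shows "attn_head (mk_head \<alpha> \<beta> \<kappa> \<mu> vf lm) X p = vec_of dm (\<lambda>r.
     (\<Sum>q\<in>argmax_set (mk_head \<alpha> \<beta> \<kappa> \<mu> vf lm) X p. \<Sum>j<dm. vf r j * X!q!j) / real (card (argmax_set (mk_head \<alpha> \<beta> \<kappa> \<mu> vf lm) X p)))"
proof -
  have "\<And>q. q \<in> argmax_set (mk_head \<alpha> \<beta> \<kappa> \<mu> vf lm) X p \<Longrightarrow> length (X ! q) = dm"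
    using assms by (auto simp: argmax_set_def)
  then show ?thesis
    unfolding attn_head_def vec_of_def length_WV_mk_head
    apply (intro map_cong refl arg_cong2[where f="(/)"] sum.cong)
    apply (simp add: mk_head_def mv_mat_of)
    done
qed

lemma length_attn_head[simp]: "length (attn_head h X p) = length (WV h)"
  by (simp add: attn_head_def)

lemma attn_zh: 
  assumes "\<And>q. q < length X \<Longrightarrow> length (X ! q) = dm"
  shows "attn_head zh X p = vec_of dm (\<lambda>_. 0)"
  unfolding zh_def using assms by (simp add: attn_head_mk_head)

lemma f_attn_mk_layer:
  assumes "\<And>q. q < length X \<Longrightarrow> length (X ! q) = dm"
   and "length (WV h0) = dm" "length (WV h1) = dm"
  shows "f_attn (mk_layer h0 h1 A B) X p = vec_of dm (\<lambda>r. attn_head h0 X p ! r + attn_head h1 X p ! r)"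
proof -
  let ?c = "concat (map (\<lambda>h. attn_head h X p) ([h0, h1] @ replicate 9 zh))"
  have lz: "length (WV zh) = dm" by (simp add: zh_def)
  have len: "length ?c = 11 * dm"
    using assms lz by (simp add: length_concat sum_list_replicate)
  have c0: "r < dm \<Longrightarrow> ?c ! r = attn_head h0 X p ! r" for r
    using assms by (simp add: nth_append)
  have c1: "r < dm \<Longrightarrow> ?c ! (dm + r) = attn_head h1 X p ! r" for r
    using assms by (simp add: nth_append)
  have "f_attn (mk_layer h0 h1 A B) X p = mv WOsum ?c"
    by (simp add: f_attn_def mk_layer_def)
  also have "\<dots> = vec_of dm (\<lambda>r. \<Sum>j<11*dm. ((if j = r then 1 else 0) + (if j = dm + r then 1 else 0)) * ?c ! j)"
    unfolding WOsum_def by (rule mv_mat_of[OF len])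
  also have "\<dots> = vec_of dm (\<lambda>r. attn_head h0 X p ! r + attn_head h1 X p ! r)"
    apply (rule vec_of_cong)
    apply (simp only: distrib_right sum.distrib)
    apply (subst sum_delta_mult, simp)
    apply (subst sum_delta_mult, simp)
    apply (simp add: nth_append assms)
    done
  finally show ?thesis .
qed

lemma ffn_zero: "length x = dm \<Longrightarrow> vadd x (f_ffn (mk_layer h0 h1 Z1 Z2) x) = x"
proof -
  assume l: "length x = dm"
  have "f_ffn (mk_layer h0 h1 Z1 Z2) x = vec_of dm (\<lambda>_. 0)"
    using l by (simp add: f_ffn_def mk_layer_def Z1_def Z2_def mv_mat_of vadd_def vec_of_def zip_map_map
        zip_same_conv_map comp_def map_replicate_const zip_replicate)
  then show ?thesis using l vadd_vec_of[of dm "\<lambda>i. x!i" "\<lambda>_. 0"] by (simp add: vec_of_nth)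
qed

lemma map2_zero_right[simp]: "map2 (+) (map f [0..<n]) (replicate n (0::real)) = map f [0..<n]"
  by (rule nth_equalityI) auto

lemma relu_vec_of: "map (\<lambda>z. max 0 z) (vec_of n f) = vec_of n (\<lambda>r. max 0 (f r))"
  by (simp add: vec_of_def)

lemma ffn_lin: "length x = dm \<Longrightarrow> vadd x (f_ffn (mk_layer h0 h1 L1 (L2 M)) x) = vec_of dm (\<lambda>i. \<Sum>j<dm. M i j * x ! j)"
proof -
  assume l: "length x = dm"
  let ?h = "\<lambda>r::nat. max 0 (if r < dm then x ! r else if r < 2*dm then - (x ! (r - dm)) else (0::real))"
  have w1: "vadd (mv L1 x) (replicate (4*dm) 0) = vec_of (4*dm) (\<lambda>r. if r < dm then x ! r else if r < 2*dm then - (x ! (r - dm)) else 0)"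
  proof -
    have "mv L1 x = vec_of (4*dm) (\<lambda>r. if r < dm then x ! r else if r < 2*dm then - (x ! (r - dm)) else 0)"
      using l unfolding L1_def
      apply (simp add: mv_mat_of)
      apply (rule vec_of_cong)
      subgoal for r
      proof (cases "r < dm")
        case True
        have "(\<Sum>j<dm. (if r < dm \<and> j = r then 1 else if dm \<le> r \<and> r < 2 * dm \<and> j = r - dm then - 1 else 0) * x ! j)
            = (\<Sum>j<dm. (if j = r then 1 else 0) * x ! j)" using True by (intro sum.cong) auto
        then show ?thesis using True by simp
      next
        case False
        show ?thesis
        proof (cases "r < 2*dm")
          case True
          have "(\<Sum>j<dm. (if r < dm \<and> j = r then 1 else if dm \<le> r \<and> r < 2 * dm \<and> j = r - dm then - 1 else 0) * x ! j)
              = (\<Sum>j<dm. (if j = r - dm then -1 else 0) * x ! j)" using True False by (intro sum.cong) auto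
          then show ?thesis using True False by simp
        next
          case F2: False
          have "(\<Sum>j<dm. (if r < dm \<and> j = r then 1 else if dm \<le> r \<and> r < 2 * dm \<and> j = r - dm then - 1 else 0) * x ! j)
              = (\<Sum>j<dm. 0)" using F2 False by (intro sum.cong) auto
          then show ?thesis using F2 False by simp
        qed
      qed
      done
    moreover have "replicate (4*dm) (0::real) = vec_of (4*dm) (\<lambda>_. 0)" by (simp add: vec_of_def map_replicate_const)
    ultimately show ?thesis by (simp add: vadd_vec_of)
  qed
  have s: "(\<Sum>r<4*dm. (if r < dm then M i r - (if i = r then 1 else 0)
       else if r < 2*dm then -(M i (r - dm) - (if i = r - dm then 1 else 0)) else 0) * ?h r)
     = (\<Sum>j<dm. (M i j - (if i = j then 1 else 0)) * x ! j)" for i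
  proof -
    have z: "(\<Sum>r\<in>{2*dm..<4*dm}. (if r < dm then M i r - (if i = r then 1 else 0)
       else if r < 2*dm then -(M i (r - dm) - (if i = r - dm then 1 else 0)) else 0) * ?h r) = 0"
      by (rule sum.neutral) auto
    have e: "\<And>j. j < dm \<Longrightarrow> (M i j - (if i = j then 1 else 0)) * max 0 (x!j) + (- (M i j - (if i = j then 1 else 0))) * max 0 (-(x!j))
         = (M i j - (if i = j then 1 else 0)) * x ! j"
      by (auto simp: max_def algebra_simps)
    show ?thesis
      unfolding sum_split3 z sum.distrib[symmetric] add_0_right
      by (rule sum.cong) (auto simp: max_def algebra_simps)
  qed
  have "vadd x (f_ffn (mk_layer h0 h1 L1 (L2 M)) x) = vadd (vec_of dm (\<lambda>i. x!i)) (vec_of dm (\<lambda>i. (\<Sum>j<dm. (M i j - (if i = j then 1 else 0)) * x ! j)))"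
    using l
    apply (simp add: f_ffn_def mk_layer_def w1 relu_vec_of vec_of_nth L2_def mv_mat_of s)
    apply (simp add: vec_of_def map_replicate_const[symmetric] vadd_def zip_map_map zip_same_conv_map comp_def)
    done
  also have "\<dots> = vec_of dm (\<lambda>i. \<Sum>j<dm. M i j * x ! j)"
    unfolding vadd_vec_of
    apply (rule vec_of_cong)
    apply (simp add: algebra_simps sum_subtractf)
    done
  finally show ?thesis .
qed

end

context tfc begin

definition blkv :: "nat \<Rightarrow> (nat \<Rightarrow> real) \<Rightarrow> nat \<Rightarrow> real" where
  "blkv b f k = (if b*D \<le> k \<and> k < b*D + D then f (k - b*D) else 0)"
definition scal :: "nat \<Rightarrow> real \<Rightarrow> nat \<Rightarrow> real" where
  "scal c x k = (if k = c then x else 0)"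
definition "cS = 6*D"
definition "cONE = 7*D"
definition "cA = 8*D"
definition "cNA = 9*D"
definition "cNS = 10*D"

lemma c_lt[simp]: "cS < dm" "cONE < dm" "cA < dm" "cNA < dm" "cNS < dm" "D < dm" "0 < dm"
  by (simp_all add: cS_def cONE_def cA_def cNA_def cNS_def dm_def)

definition mkst :: "(nat \<Rightarrow> real) \<Rightarrow> (nat \<Rightarrow> real) \<Rightarrow> (nat \<Rightarrow> real) \<Rightarrow> (nat \<Rightarrow> real) \<Rightarrow> (nat \<Rightarrow> real) \<Rightarrow> (nat \<Rightarrow> real)
   \<Rightarrow> real \<Rightarrow> real \<Rightarrow> real \<Rightarrow> real \<Rightarrow> real \<Rightarrow> nat \<Rightarrow> real" where
  "mkst v0 v1 v2 v3 v4 v5 s1 s2 s3 s4 s5 k = blkv 0 v0 k + blkv 1 v1 k + blkv 2 v2 k + blkv 3 v3 k + blkv 4 v4 k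
     + blkv 5 v5 k + scal cS s1 k + scal cONE s2 k + scal cA s3 k + scal cNA s4 k + scal cNS s5 k"

definition cpyb :: "nat \<Rightarrow> nat \<Rightarrow> nat \<Rightarrow> nat \<Rightarrow> real" where
  "cpyb b b' r j = (if b'*D \<le> r \<and> r < b'*D + D \<and> j = r - b'*D + b*D then 1 else 0)"
definition cpys :: "nat \<Rightarrow> nat \<Rightarrow> nat \<Rightarrow> nat \<Rightarrow> real" where
  "cpys c c' r j = (if r = c' \<and> j = c then 1 else 0)"
definition e :: "nat \<Rightarrow> nat \<Rightarrow> real" where
  "e c j = (if j = c then 1 else 0)"

lemma sum_e[simp]: "c < dm \<Longrightarrow> (\<Sum>j<dm. e c j * f j) = f c"
  unfolding e_def by simp

lemma sum_cpys[simp]: "c < dm \<Longrightarrow> (\<Sum>j<dm. cpys c c' r j * f j) = scal c' (f c) r"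
proof -
  assume c: "c < dm"
  have "(\<Sum>j<dm. cpys c c' r j * f j) = (\<Sum>j<dm. (if j = c then (if r = c' then 1 else 0) else 0) * f j)"
    by (rule sum.cong) (auto simp: cpys_def)
  also have "\<dots> = scal c' (f c) r" using c by (simp add: scal_def)
  finally show ?thesis .
qed

lemma sum_cpyb[simp]: "b < 11 \<Longrightarrow> (\<Sum>j<dm. cpyb b b' r j * f j) = blkv b' (\<lambda>t. f (b*D + t)) r"
proof -
  assume b: "b < 11"
  have "(\<Sum>j<dm. cpyb b b' r j * f j) = (\<Sum>j<dm. (if j = r - b'*D + b*D then (if b'*D \<le> r \<and> r < b'*D + D then 1 else 0) else 0) * f j)"
    by (rule sum.cong) (auto simp: cpyb_def)
  also have "\<dots> = blkv b' (\<lambda>t. f (b*D + t)) r"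
  proof (cases "b'*D \<le> r \<and> r < b'*D + D")
    case True
    have "b * D \<le> 10 * D" using b by (intro mult_le_mono1) simp
    moreover have "r - b'*D < D" using True by linarith
    ultimately have "r - b'*D + b*D < dm" unfolding dm_def by linarith
    then show ?thesis using True by (simp add: blkv_def add.commute)
  next
    case False
    then have "\<And>j. (if j = r - b'*D + b*D then (if b'*D \<le> r \<and> r < b'*D + D then 1 else 0) else 0) * f j = (0::real)"
      by auto
    then show ?thesis using False by (auto simp: blkv_def)
  qed
  finally show ?thesis .
qed

lemma D_ne0[simp]: "D \<noteq> 0" by (simp add: D_def)

lemma blkv_cong: "(\<And>t. t < D \<Longrightarrow> f t = g t) \<Longrightarrow> blkv b f = blkv b g"
  by (auto simp: blkv_def fun_eq_iff)

lemma blkv_zero[simp]: "blkv b (\<lambda>_. 0) = (\<lambda>_. 0)"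
  by (auto simp: blkv_def fun_eq_iff)
lemma scal_zero[simp]: "scal c 0 = (\<lambda>_. 0)"
  by (auto simp: scal_def fun_eq_iff)

lemmas cdefs = cS_def cONE_def cA_def cNA_def cNS_def

lemma mkst_read:
  assumes "t < D"
  shows "mkst v0 v1 v2 v3 v4 v5 s1 s2 s3 s4 s5 t = v0 t"
   "mkst v0 v1 v2 v3 v4 v5 s1 s2 s3 s4 s5 (D + t) = v1 t"
   "mkst v0 v1 v2 v3 v4 v5 s1 s2 s3 s4 s5 (2*D + t) = v2 t"
   "mkst v0 v1 v2 v3 v4 v5 s1 s2 s3 s4 s5 (3*D + t) = v3 t"
   "mkst v0 v1 v2 v3 v4 v5 s1 s2 s3 s4 s5 (4*D + t) = v4 t"
   "mkst v0 v1 v2 v3 v4 v5 s1 s2 s3 s4 s5 (5*D + t) = v5 t"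
  using assms by (simp_all add: mkst_def blkv_def scal_def cdefs)

lemma mkst_read_s[simp]:
   "mkst v0 v1 v2 v3 v4 v5 s1 s2 s3 s4 s5 cS = s1"
   "mkst v0 v1 v2 v3 v4 v5 s1 s2 s3 s4 s5 cONE = s2"
   "mkst v0 v1 v2 v3 v4 v5 s1 s2 s3 s4 s5 cA = s3"
   "mkst v0 v1 v2 v3 v4 v5 s1 s2 s3 s4 s5 cNA = s4"
   "mkst v0 v1 v2 v3 v4 v5 s1 s2 s3 s4 s5 cNS = s5"
  by (simp_all add: mkst_def blkv_def scal_def cdefs)

lemma mkst_D[simp]: "mkst v0 v1 v2 v3 v4 v5 s1 s2 s3 s4 s5 D = v1 0"
  using mkst_read(2)[of 0] by simp

lemma apply_layer_gen:
  assumes att: "\<And>p. p < n \<Longrightarrow> f_attn l (map (\<lambda>i. vec_of dm (st i)) [0..<n]) p = vec_of dm (att p)"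
   and ffn: "\<And>x. length x = dm \<Longrightarrow> vadd x (f_ffn l x) = G x"
  shows "apply_layer l (map (\<lambda>i. vec_of dm (st i)) [0..<n]) = map (\<lambda>i. G (vec_of dm (\<lambda>k. st i k + att i k))) [0..<n]"
  unfolding apply_layer_def Let_def
  by (simp add: att ffn vadd_vec_of)

lemma argmax_single:
  assumes "q0 < length X" "\<And>q. q < length X \<Longrightarrow> q \<noteq> q0 \<Longrightarrow> score h X p q < score h X p q0"
  shows "argmax_set h X p = {q0}"
proof -
  have "\<And>q. q < length X \<Longrightarrow> score h X p q \<le> score h X p q0"
    using assms(2) by (metis order.order_iff_strict order_refl)
  then show ?thesis using assms unfolding argmax_set_def
    by (auto simp: not_le[symmetric])
qed

lemma attn_single:
  assumes "\<And>q. q < length X \<Longrightarrow> length (X ! q) = dm"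
    and "argmax_set (mk_head \<alpha> \<beta> \<kappa> \<mu> vf lm) X p = {q0}"
  shows "attn_head (mk_head \<alpha> \<beta> \<kappa> \<mu> vf lm) X p = vec_of dm (\<lambda>r. \<Sum>j<dm. vf r j * X!q0!j)"
  using assms by (simp add: attn_head_mk_head)

end

context tfc begin

abbreviation XS :: "nat \<Rightarrow> (nat \<Rightarrow> nat \<Rightarrow> real) \<Rightarrow> vec list" where
  "XS n st \<equiv> map (\<lambda>i. vec_of dm (st i)) [0..<n]"

lemma XS_len: "q < length (XS n st) \<Longrightarrow> length (XS n st ! q) = dm" by simp
lemma XS_nth: "i < n \<Longrightarrow> XS n st ! i = vec_of dm (st i)" by simp

lemma sum_XS: "q < n \<Longrightarrow> (\<Sum>j<dm. f j * XS n st ! q ! j) = (\<Sum>j<dm. f j * st q j)"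
  by (rule sum.cong) auto

lemma score_st:
  assumes "p < n" "q < n"
  shows "score (mk_head \<alpha> \<beta> \<kappa> \<mu> vf lm) (XS n st) p q =
     (\<Sum>j<dm. \<alpha> j * st p j) * (\<Sum>j<dm. \<kappa> j * st q j) + (\<Sum>j<dm. \<beta> j * st p j) * (\<Sum>j<dm. \<mu> j * st q j)
     + fst lm * (real q - real p) + snd lm * (if q > p then 1 else 0)"
  using assms by (simp add: score_mk_head sum_XS)

lemma attn_st:
  assumes "argmax_set (mk_head \<alpha> \<beta> \<kappa> \<mu> vf lm) (XS n st) p = {qz}" "qz < n"
  shows "attn_head (mk_head \<alpha> \<beta> \<kappa> \<mu> vf lm) (XS n st) p = vec_of dm (\<lambda>r. \<Sum>j<dm. vf r j * st qz j)"
  using attn_single[OF XS_len assms(1)] assms(2) by (simp add: sum_XS)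

lemma argmax_st:
  assumes "qz < n" "\<And>q. q < n \<Longrightarrow> q \<noteq> qz \<Longrightarrow> score h (XS n st) p q < score h (XS n st) p qz"
  shows "argmax_set h (XS n st) p = {qz}"
  using assms by (intro argmax_single) auto

lemma zero_head_score: "p < n \<Longrightarrow> q < n \<Longrightarrow> score (mk_head (\<lambda>_. 0) (\<lambda>_. 0) (\<lambda>_. 0) (\<lambda>_. 0) vf lm) (XS n st) p q
   = fst lm * (real q - real p) + snd lm * (if q > p then 1 else 0)"
  by (simp add: score_st)

definition "hU = mk_head (\<lambda>_. 0) (\<lambda>_. 0) (\<lambda>_. 0) (\<lambda>_. 0) (cpys cS cA) (0, -1)"
definition "hO = mk_head (\<lambda>_. 0) (\<lambda>_. 0) (\<lambda>_. 0) (\<lambda>_. 0) (cpys cS cONE) (-1, 0)"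

lemma argmax_hU: "p < n \<Longrightarrow> argmax_set hU (XS n st) p = {..p}"
proof -
  assume p: "p < n"
  have sc: "\<And>q. q < n \<Longrightarrow> score hU (XS n st) p q = (if q > p then -1 else 0)"
    using p by (simp add: hU_def zero_head_score)
  show ?thesis
  proof (rule set_eqI, rule iffI)
    fix q assume "q \<in> argmax_set hU (XS n st) p"
    then have "q < n" "score hU (XS n st) p p \<le> score hU (XS n st) p q" using p by (auto simp: argmax_set_def)
    then show "q \<in> {..p}" using sc[of q] sc[of p] p by (auto split: if_splits)
  next
    fix q assume "q \<in> {..p}"
    then show "q \<in> argmax_set hU (XS n st) p" using p sc by (auto simp: argmax_set_def)
  qed
qed

lemma argmax_hO: "p < n \<Longrightarrow> argmax_set hO (XS n st) p = {0}"
  unfolding hO_def by (rule argmax_st) (auto simp: zero_head_score)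

lemma f_attn_L1:
  assumes "p < n" "\<And>q. st q cS = (if q = 0 then 1 else 0)"
  shows "f_attn (mk_layer hU hO A B) (XS n st) p = vec_of dm (\<lambda>r. scal cA (aa p) r + scal cONE 1 r)"
proof -
  have u: "attn_head hU (XS n st) p = vec_of dm (\<lambda>r. scal cA (aa p) r)"
  proof -
    have "attn_head hU (XS n st) p = vec_of dm (\<lambda>r. (\<Sum>q\<in>{..p}. \<Sum>j<dm. cpys cS cA r j * XS n st ! q ! j) / real (card {..p}))"
    proof -
      have "attn_head hU (XS n st) p = vec_of dm (\<lambda>r. (\<Sum>q\<in>argmax_set hU (XS n st) p. \<Sum>j<dm. cpys cS cA r j * XS n st ! q ! j) / real (card (argmax_set hU (XS n st) p)))"
        unfolding hU_def by (rule attn_head_mk_head[OF XS_len])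
      then show ?thesis using argmax_hU[OF assms(1)] by simp
    qed
    also have "\<dots> = vec_of dm (\<lambda>r. (\<Sum>q\<in>{..p}. scal cA (if q = 0 then 1 else 0) r) / real (Suc p))"
      apply (rule vec_of_cong)
      apply (rule arg_cong2[where f="(/)"])
       apply (rule sum.cong, simp)
      using assms by (simp_all add: sum_XS)
    also have "\<dots> = vec_of dm (\<lambda>r. scal cA (aa p) r)"
    proof (rule vec_of_cong)
      fix r
      have "(\<Sum>q\<in>{..p}. scal cA (if q = 0 then 1 else 0) r) = (\<Sum>q\<in>{..p}. if q = 0 then scal cA 1 r else 0)"
        by (rule sum.cong) (auto simp: scal_def)
      also have "\<dots> = scal cA 1 r" by (simp add: sum.delta)
      finally show "(\<Sum>q\<in>{..p}. scal cA (if q = 0 then 1 else 0) r) / real (Suc p) = scal cA (aa p) r"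
        by (simp add: scal_def aa_def)
    qed
    finally show ?thesis .
  qed
  have o: "attn_head hO (XS n st) p = vec_of dm (\<lambda>r. scal cONE 1 r)"
    unfolding hO_def
    apply (subst attn_st[where qz=0])
    using argmax_hO[OF assms(1)] assms by (simp_all add: hO_def)
  have "f_attn (mk_layer hU hO A B) (XS n st) p = vec_of dm (\<lambda>r. attn_head hU (XS n st) p ! r + attn_head hO (XS n st) p ! r)"
    by (rule f_attn_mk_layer[OF XS_len]) (simp_all add: hU_def hO_def)
  also have "\<dots> = vec_of dm (\<lambda>r. scal cA (aa p) r + scal cONE 1 r)"
    by (rule vec_of_cong) (simp add: u o)
  finally show ?thesis .
qed


lemma sum_lin2[simp]: "c1 < dm \<Longrightarrow> c2 < dm \<Longrightarrow> (\<Sum>j<dm. (u * e c1 j + w * e c2 j) * f j) = u * f c1 + w * f c2"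
  by (simp add: distrib_right sum.distrib mult.assoc sum_distrib_left[symmetric])

lemma sum_lin3[simp]: "c1 < dm \<Longrightarrow> c2 < dm \<Longrightarrow> c3 < dm \<Longrightarrow>
   (\<Sum>j<dm. (u * e c1 j + w * e c2 j + y * e c3 j) * f j) = u * f c1 + w * f c2 + y * f c3"
  by (simp add: distrib_right sum.distrib mult.assoc sum_distrib_left[symmetric])

lemma sum_zero_coef[simp]: "(\<Sum>j<dm. (\<lambda>_. 0::real) j * f j) = 0" by simp

lemma sum_vf2[simp]: "(\<Sum>j<dm. (F r j + G r j) * f j) = (\<Sum>j<dm. F r j * f j) + (\<Sum>j<dm. G r j * (f j::real))"
  by (simp add: distrib_right sum.distrib)

lemma blkv_mkst[simp]:
  "blkv b (\<lambda>t. mkst v0 v1 v2 v3 v4 v5 s1 s2 s3 s4 s5 t) = blkv b v0"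
  "blkv b (\<lambda>t. mkst v0 v1 v2 v3 v4 v5 s1 s2 s3 s4 s5 (D + t)) = blkv b v1"
  "blkv b (\<lambda>t. mkst v0 v1 v2 v3 v4 v5 s1 s2 s3 s4 s5 (2 * D + t)) = blkv b v2"
  "blkv b (\<lambda>t. mkst v0 v1 v2 v3 v4 v5 s1 s2 s3 s4 s5 (3 * D + t)) = blkv b v3"
  "blkv b (\<lambda>t. mkst v0 v1 v2 v3 v4 v5 s1 s2 s3 s4 s5 (4 * D + t)) = blkv b v4"
  "blkv b (\<lambda>t. mkst v0 v1 v2 v3 v4 v5 s1 s2 s3 s4 s5 (5 * D + t)) = blkv b v5"
  by (auto intro!: blkv_cong simp: mkst_read)

definition "hN = mk_head (e cONE) (\<lambda>_. 0) (e cA) (\<lambda>_. 0) (\<lambda>r j. cpys cA cNA r j + cpys cS cNS r j) (0, 2)"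
definition "hP vf = mk_head (e cA) (\<lambda>j. 1/2 * e cONE j + 1/4 * e cA j) (e cA)
    (\<lambda>j. (-1) * e cA j + 1 * e cNA j + (-2) * e cNS j) vf (0, 0)"
definition "hJ vf = mk_head (e cONE) (\<lambda>_. 0) (\<lambda>j. (-1) * e cA j + 3 * e D j) (\<lambda>_. 0) vf (0, -10)"
definition "Mout = (\<lambda>r j. cpyb 4 0 r j + cpyb 5 1 r j)"
definition "Lay1 = mk_layer hU hO Z1 Z2"
definition "Lay2 = mk_layer hN zh Z1 Z2"
definition "Lay3 = mk_layer (hP (cpyb 0 1)) zh Z1 Z2"
definition "Lay4 = mk_layer (hJ (cpyb 1 2)) zh Z1 Z2"
definition "Lay5 = mk_layer (hP (cpyb 2 3)) zh Z1 Z2"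
definition "Lay6 = mk_layer (hJ (\<lambda>r j. cpyb 1 4 r j + cpyb 3 5 r j)) zh L1 (L2 Mout)"
definition "LayZ = mk_layer zh zh Z1 Z2"
definition "startv = vec_of dm (scal cS 1)"
definition "FL = \<lparr>start = startv, layers = [Lay1, Lay2, Lay3, Lay4, Lay5, Lay6] @ replicate 5 LayZ\<rparr>"

lemma FL_TF: "FL \<in> TF dm 11 11"
  by (auto simp: TF_def FL_def startv_def Lay1_def Lay2_def Lay3_def Lay4_def Lay5_def Lay6_def LayZ_def
     hU_def hO_def hN_def hP_def hJ_def intro!: wf_mk_layer wf_mk_head wf_zh is_mat_Z1 is_mat_Z2 is_mat_L1 is_mat_L2)

lemma layZ_id: "apply_layer LayZ (XS n st) = XS n st"
proof -
  have a: "f_attn (mk_layer zh zh Z1 Z2) (XS n st) p = vec_of dm (\<lambda>r. 0)" for p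
  proof -
    have "f_attn (mk_layer zh zh Z1 Z2) (XS n st) p = vec_of dm (\<lambda>r. attn_head zh (XS n st) p ! r + attn_head zh (XS n st) p ! r)"
      by (rule f_attn_mk_layer[OF XS_len]) (simp_all add: zh_def)
    also have "\<dots> = vec_of dm (\<lambda>r. 0)"
    proof -
    have "attn_head zh (XS n st) p = vec_of dm (\<lambda>_. 0)" by (rule attn_zh) simp
    then show ?thesis by (intro vec_of_cong) simp
  qed
    finally show ?thesis .
  qed
  have "apply_layer LayZ (XS n st) = map (\<lambda>i. (\<lambda>x. x) (vec_of dm (\<lambda>k. st i k + 0))) [0..<n]"
    unfolding LayZ_def
    by (rule apply_layer_gen[where G="\<lambda>x. x"]) (simp_all add: a ffn_zero)
  then show ?thesis by simp
qed


lemma f_attn_single: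
  assumes "argmax_set (mk_head \<alpha> \<beta> \<kappa> \<mu> vf lm) (XS n st) p = {qz}" "qz < n"
  shows "f_attn (mk_layer (mk_head \<alpha> \<beta> \<kappa> \<mu> vf lm) zh A B) (XS n st) p = vec_of dm (\<lambda>r. \<Sum>j<dm. vf r j * st qz j)"
proof -
  have "f_attn (mk_layer (mk_head \<alpha> \<beta> \<kappa> \<mu> vf lm) zh A B) (XS n st) p
     = vec_of dm (\<lambda>r. attn_head (mk_head \<alpha> \<beta> \<kappa> \<mu> vf lm) (XS n st) p ! r + attn_head zh (XS n st) p ! r)"
    by (rule f_attn_mk_layer[OF XS_len]) (simp_all add: zh_def)
  also have "\<dots> = vec_of dm (\<lambda>r. \<Sum>j<dm. vf r j * st qz j)"
  proof -
    have "attn_head zh (XS n st) p = vec_of dm (\<lambda>_. 0)" by (rule attn_zh) simp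
    then show ?thesis using attn_st[OF assms] by (intro vec_of_cong) simp
  qed
  finally show ?thesis .
qed

lemma step_zero:
  assumes "\<And>p. p < n \<Longrightarrow> argmax_set (mk_head \<alpha> \<beta> \<kappa> \<mu> vf lm) (XS n st) p = {tg p}" "\<And>p. p < n \<Longrightarrow> tg p < n"
   and "\<And>i k. i < n \<Longrightarrow> k < dm \<Longrightarrow> st i k + (\<Sum>j<dm. vf k j * st (tg i) j) = st' i k"
  shows "apply_layer (mk_layer (mk_head \<alpha> \<beta> \<kappa> \<mu> vf lm) zh Z1 Z2) (XS n st) = XS n st'"
proof -
  have "apply_layer (mk_layer (mk_head \<alpha> \<beta> \<kappa> \<mu> vf lm) zh Z1 Z2) (XS n st)
     = map (\<lambda>i. (\<lambda>x. x) (vec_of dm (\<lambda>k. st i k + (\<Sum>j<dm. vf k j * st (tg i) j)))) [0..<n]"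
    by (rule apply_layer_gen) (simp_all add: f_attn_single assms ffn_zero)
  also have "\<dots> = XS n st'"
    by (intro map_cong refl vec_of_cong) (simp add: assms(3))
  finally show ?thesis .
qed

lemma step_lin:
  assumes "\<And>p. p < n \<Longrightarrow> argmax_set (mk_head \<alpha> \<beta> \<kappa> \<mu> vf lm) (XS n st) p = {tg p}" "\<And>p. p < n \<Longrightarrow> tg p < n"
   and "\<And>i k. i < n \<Longrightarrow> k < dm \<Longrightarrow> st i k + (\<Sum>j<dm. vf k j * st (tg i) j) = sa i k"
   and "\<And>i k. i < n \<Longrightarrow> k < dm \<Longrightarrow> (\<Sum>j<dm. M k j * sa i j) = st' i k"
  shows "apply_layer (mk_layer (mk_head \<alpha> \<beta> \<kappa> \<mu> vf lm) zh L1 (L2 M)) (XS n st) = XS n st'"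
proof -
  have "apply_layer (mk_layer (mk_head \<alpha> \<beta> \<kappa> \<mu> vf lm) zh L1 (L2 M)) (XS n st)
     = map (\<lambda>i. (\<lambda>x. vec_of dm (\<lambda>k. \<Sum>j<dm. M k j * x ! j)) (vec_of dm (\<lambda>k. st i k + (\<Sum>j<dm. vf k j * st (tg i) j)))) [0..<n]"
    by (rule apply_layer_gen) (simp_all add: f_attn_single assms ffn_lin)
  also have "\<dots> = XS n st'"
  proof (intro map_cong refl)
    fix i assume "i \<in> set [0..<n]"
    then have i: "i < n" by simp
    have "(\<Sum>j<dm. M k j * vec_of dm (\<lambda>k. st i k + (\<Sum>j<dm. vf k j * st (tg i) j)) ! j) = st' i k" if "k < dm" for k
    proof -
      have "(\<Sum>j<dm. M k j * vec_of dm (\<lambda>k. st i k + (\<Sum>j<dm. vf k j * st (tg i) j)) ! j) = (\<Sum>j<dm. M k j * sa i j)"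
        by (rule sum.cong) (simp_all add: assms(3) i)
      then show ?thesis using assms(4) i that by simp
    qed
    then show "vec_of dm (\<lambda>k. \<Sum>j<dm. M k j * vec_of dm (\<lambda>k. st i k + (\<Sum>j<dm. vf k j * st (tg i) j)) ! j) = vec_of dm (st' i)"
      by (intro vec_of_cong) simp
  qed
  finally show ?thesis .
qed


lemma sum_lin1[simp]: "c < dm \<Longrightarrow> (\<Sum>j<dm. (u * e c j) * f j) = u * f c"
  by (simp add: mult.assoc sum_distrib_left[symmetric])

definition "hR vf = mk_head (e cONE) (e cS) (\<lambda>j. 1 * e cA j + 3 * e 0 j + 5 * e cS j) (\<lambda>j. 100 * e cS j) vf (0, 10)"
definition "RLay2 = mk_layer (hR (cpyb 0 2)) zh Z1 Z2"
definition "RLay3 = mk_layer (hR (\<lambda>r j. cpyb 0 4 r j + cpyb 2 5 r j)) zh L1 (L2 Mout)"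
definition "FR = \<lparr>start = startv, layers = [Lay1, RLay2, RLay3] @ replicate 8 LayZ\<rparr>"

lemma FR_TF: "FR \<in> TF dm 11 11"
  by (auto simp: TF_def FR_def startv_def Lay1_def RLay2_def RLay3_def LayZ_def
     hU_def hO_def hR_def intro!: wf_mk_layer wf_mk_head wf_zh is_mat_Z1 is_mat_Z2 is_mat_L1 is_mat_L2)

end

locale tfw = tfc +
  fixes enc :: "nat option \<Rightarrow> real list" and w :: "nat option list"
  assumes enc_len: "u \<in> set w \<Longrightarrow> length (enc u) = D"
    and enc_None: "enc None = replicate D 0"
    and enc_some0: "u \<in> set w \<Longrightarrow> u \<noteq> None \<Longrightarrow> enc u ! 0 = 1"
begin

abbreviation "N \<equiv> length w"
definition n where "n = Suc N"

definition vin :: "nat \<Rightarrow> real list" where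
  "vin i = (if 1 \<le> i \<and> i \<le> N then enc (w ! (i - 1)) else replicate D 0)"
definition v :: "nat \<Rightarrow> nat \<Rightarrow> real" where "v i t = (if t < D then vin i ! t else 0)"

lemma w_mem: "1 \<le> i \<Longrightarrow> i \<le> N \<Longrightarrow> w ! (i - 1) \<in> set w"
  by (intro nth_mem) simp

lemma vin_len: "length (vin i) = D"
  by (auto simp: vin_def intro!: enc_len w_mem)

lemma v01: "v i 0 = 0 \<or> v i 0 = 1"
proof (cases "1 \<le> i \<and> i \<le> N")
  case True
  then have m: "w ! (i - 1) \<in> set w" using w_mem by auto
  show ?thesis
  proof (cases "w ! (i - 1) = None")
    case True then show ?thesis using \<open>1 \<le> i \<and> i \<le> N\<close> by (simp add: v_def vin_def enc_None)
  next
    case False then show ?thesis using \<open>1 \<le> i \<and> i \<le> N\<close> enc_some0[OF m] by (simp add: v_def vin_def)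
  qed
qed (auto simp: v_def vin_def)

lemma v0[simp]: "v 0 t = 0" by (simp add: v_def vin_def)

abbreviation "z \<equiv> (\<lambda>_::nat. 0::real)"

definition "st0 i = mkst (v i) z z z z z (if i = 0 then 1 else 0) 0 0 0 0"
definition "st1 i = mkst (v i) z z z z z (if i = 0 then 1 else 0) 1 (aa i) 0 0"

lemma X0: "start FL # map (\<lambda>a. pad dm (enc a)) w = XS n st0"
proof (rule nth_equalityI)
  show "length (start FL # map (\<lambda>a. pad dm (enc a)) w) = length (XS n st0)" by (simp add: n_def)
next
  fix i assume "i < length (start FL # map (\<lambda>a. pad dm (enc a)) w)"
  then have i: "i < n" by (simp add: n_def)
  show "(start FL # map (\<lambda>a. pad dm (enc a)) w) ! i = XS n st0 ! i"
  proof (cases i)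
    case 0
    have "startv = vec_of dm (st0 0)"
      unfolding startv_def st0_def by (rule vec_of_cong) (simp add: mkst_def blkv_def scal_def)
    then show ?thesis using 0 i by (simp add: FL_def)
  next
    case (Suc k)
    then have k: "k < N" using i by (simp add: n_def)
    then have l: "length (enc (w ! k)) = D" using enc_len by simp
    have dd: "D \<le> dm" by (simp add: dm_def)
    have "pad dm (enc (w ! k)) = vec_of dm (st0 (Suc k))"
    proof (rule nth_equalityI)
      show "length (pad dm (enc (w ! k))) = length (vec_of dm (st0 (Suc k)))"
        using l dd by (simp add: pad_def)
    next
      fix j assume "j < length (pad dm (enc (w ! k)))"
      then have j: "j < dm" using l dd by (simp add: pad_def)
      show "pad dm (enc (w ! k)) ! j = vec_of dm (st0 (Suc k)) ! j"
        using j l k by (simp add: pad_def nth_append st0_def mkst_def blkv_def scal_def v_def vin_def)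
    qed
    then show ?thesis using Suc k i by (simp add: XS_nth)
  qed
qed

lemma step1: "apply_layer Lay1 (XS n st0) = XS n st1"
proof -
  have "apply_layer Lay1 (XS n st0) = map (\<lambda>i. vec_of dm (\<lambda>k. st0 i k + (scal cA (aa i) k + scal cONE 1 k))) [0..<n]"
    unfolding Lay1_def
    by (rule apply_layer_gen[where G="\<lambda>x. x"]) (simp_all add: f_attn_L1 st0_def ffn_zero)
  also have "\<dots> = XS n st1"
    by (intro map_cong refl vec_of_cong) (simp add: st0_def st1_def mkst_def)
  finally show ?thesis .
qed


lemma n_pos: "0 < n" by (simp add: n_def)

definition "NA i = aa (nxt n i)"
definition "NS i = (if nxt n i = 0 then 1 else (0::real))"
definition "st2 i = mkst (v i) z z z z z (if i = 0 then 1 else 0) 1 (aa i) (NA i) (NS i)"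

lemma step2: "apply_layer Lay2 (XS n st1) = XS n st2"
  unfolding Lay2_def hN_def
proof (rule step_zero[where tg="nxt n"])
  fix p assume p: "p < n"
  show "nxt n p < n" by (rule nxt_lt[OF n_pos])
  show "argmax_set (mk_head (e cONE) (\<lambda>_. 0) (e cA) (\<lambda>_. 0) (\<lambda>r j. cpys cA cNA r j + cpys cS cNS r j) (0, 2)) (XS n st1) p = {nxt n p}"
  proof (rule argmax_st)
    show "nxt n p < n" by (rule nxt_lt[OF n_pos])
    fix q assume q: "q < n" "q \<noteq> nxt n p"
    show "score (mk_head (e cONE) (\<lambda>_. 0) (e cA) (\<lambda>_. 0) (\<lambda>r j. cpys cA cNA r j + cpys cS cNS r j) (0, 2)) (XS n st1) p q
        < score (mk_head (e cONE) (\<lambda>_. 0) (e cA) (\<lambda>_. 0) (\<lambda>r j. cpys cA cNA r j + cpys cS cNS r j) (0, 2)) (XS n st1) p (nxt n p)"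
      using nxt_max[OF p q] p q nxt_lt[OF n_pos, of p] by (simp add: score_st st1_def)
  qed
next
  fix i k assume "i < n" "k < dm"
  show "st1 i k + (\<Sum>j<dm. (cpys cA cNA k j + cpys cS cNS k j) * st1 (nxt n i) j) = st2 i k"
    by (simp add: st1_def st2_def NA_def NS_def) (simp add: mkst_def)
qed


lemma argmax_hP:
  assumes "\<And>i. st i cA = aa i" "\<And>i. st i cONE = 1" "\<And>i. st i cNA = NA i" "\<And>i. st i cNS = NS i" "p < n"
  shows "argmax_set (hP vf) (XS n st) p = {p - 1}"
proof (rule argmax_st)
  show "p - 1 < n" using assms by simp
  have sc: "score (hP vf) (XS n st) p q = scP n p q" if "q < n" for q
  proof -
    have "score (hP vf) (XS n st) p q = aa p * aa q + (1/2 * 1 + 1/4 * aa p) * ((-1) * aa q + 1 * NA q + (-2) * NS q)"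
      using that assms by (simp only: hP_def score_st sum_lin2 sum_lin3 sum_e c_lt) simp
    then show ?thesis by (cases "Suc q < n") (simp_all add: scP_def NA_def NS_def nxt_def algebra_simps)
  qed
  fix q assume q: "q < n" "q \<noteq> p - 1"
  show "score (hP vf) (XS n st) p q < score (hP vf) (XS n st) p (p - 1)"
    using prev_max[OF assms(5) q] sc q assms(5) by simp
qed

definition "Dd i = v (i - 1)"
definition "st3 i = mkst (v i) (Dd i) z z z z (if i = 0 then 1 else 0) 1 (aa i) (NA i) (NS i)"

lemma step3: "apply_layer Lay3 (XS n st2) = XS n st3"
  unfolding Lay3_def hP_def
proof (rule step_zero[where tg="\<lambda>p. p - 1"])
  fix p assume p: "p < n"
  show "p - 1 < n" using p by simp
  show "argmax_set (mk_head (e cA) (\<lambda>j. 1 / 2 * e cONE j + 1 / 4 * e cA j) (e cA)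
         (\<lambda>j. - 1 * e cA j + 1 * e cNA j + - 2 * e cNS j) (cpyb 0 1) (0, 0)) (XS n st2) p = {p - 1}"
    using argmax_hP[of st2 p "cpyb 0 1"] p unfolding hP_def by (simp add: st2_def)
next
  fix i k assume "i < n" "k < dm"
  show "st2 i k + (\<Sum>j<dm. cpyb 0 1 k j * st2 (i - 1) j) = st3 i k"
    by (simp add: st2_def st3_def Dd_def) (simp add: mkst_def)
qed

definition "cc j = Dd j 0"
definition "JJ = Jf cc"
definition "N1 i = Dd (JJ i)"
definition "st4 i = mkst (v i) (Dd i) (N1 i) z z z (if i = 0 then 1 else 0) 1 (aa i) (NA i) (NS i)"

lemma cc01: "cc q = 0 \<or> cc q = 1" by (simp add: cc_def Dd_def v01)

lemma JJ_lt: "p < n \<Longrightarrow> JJ p < n" using Jf_le[of cc p] by (simp add: JJ_def)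

lemma argmax_hJ:
  assumes "\<And>i. st i cA = aa i" "\<And>i. st i cONE = 1" "\<And>i. st i D = cc i" "p < n"
  shows "argmax_set (hJ vf) (XS n st) p = {JJ p}"
proof (rule argmax_st)
  show "JJ p < n" using assms JJ_lt by simp
  have sc: "score (hJ vf) (XS n st) p q = - aa q + 3 * cc q - 10 * (if q > p then 1 else 0)" if "q < n" for q
  proof -
    have "score (hJ vf) (XS n st) p q = 1 * ((-1) * aa q + 3 * cc q) + 0 + 0 * (real q - real p) + (-10) * (if q > p then 1 else 0)"
      using that assms by (simp only: hJ_def score_st sum_lin2 sum_e c_lt sum_zero_coef) simp
    then show ?thesis by simp
  qed
  fix q assume q: "q < n" "q \<noteq> JJ p"
  show "score (hJ vf) (XS n st) p q < score (hJ vf) (XS n st) p (JJ p)"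
    using J_max[of cc q p] cc01 q sc JJ_lt[OF assms(4)] by (simp add: JJ_def)
qed

lemma step4: "apply_layer Lay4 (XS n st3) = XS n st4"
  unfolding Lay4_def hJ_def
proof (rule step_zero[where tg="JJ"])
  fix p assume p: "p < n"
  show "JJ p < n" using p by (rule JJ_lt)
  show "argmax_set (mk_head (e cONE) (\<lambda>_. 0) (\<lambda>j. - 1 * e cA j + 3 * e D j) (\<lambda>_. 0) (cpyb 1 2) (0, - 10)) (XS n st3) p = {JJ p}"
    using argmax_hJ[of st3 p "cpyb 1 2"] p unfolding hJ_def by (simp add: st3_def cc_def)
next
  fix i k assume "i < n" "k < dm"
  show "st3 i k + (\<Sum>j<dm. cpyb 1 2 k j * st3 (JJ i) j) = st4 i k"
    by (simp add: st3_def st4_def N1_def) (simp add: mkst_def)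
qed

definition "P i = N1 (i - 1)"
definition "st5 i = mkst (v i) (Dd i) (N1 i) (P i) z z (if i = 0 then 1 else 0) 1 (aa i) (NA i) (NS i)"

lemma step5: "apply_layer Lay5 (XS n st4) = XS n st5"
  unfolding Lay5_def hP_def
proof (rule step_zero[where tg="\<lambda>p. p - 1"])
  fix p assume p: "p < n"
  show "p - 1 < n" using p by simp
  show "argmax_set (mk_head (e cA) (\<lambda>j. 1 / 2 * e cONE j + 1 / 4 * e cA j) (e cA)
         (\<lambda>j. - 1 * e cA j + 1 * e cNA j + - 2 * e cNS j) (cpyb 2 3) (0, 0)) (XS n st4) p = {p - 1}"
    using argmax_hP[of st4 p "cpyb 2 3"] p unfolding hP_def by (simp add: st4_def)
next
  fix i k assume "i < n" "k < dm"
  show "st4 i k + (\<Sum>j<dm. cpyb 2 3 k j * st4 (i - 1) j) = st5 i k"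
    by (simp add: st4_def st5_def P_def) (simp add: mkst_def)
qed

definition "O1 i = Dd (JJ i)"
definition "O2 i = P (JJ i)"
definition "st5a i = mkst (v i) (Dd i) (N1 i) (P i) (O1 i) (O2 i) (if i = 0 then 1 else 0) 1 (aa i) (NA i) (NS i)"
definition "st6 i = mkst (O1 i) (O2 i) z z z z 0 0 0 0 0"

lemma step6: "apply_layer Lay6 (XS n st5) = XS n st6"
  unfolding Lay6_def hJ_def
proof (rule step_lin[where tg="JJ" and sa=st5a])
  fix p assume p: "p < n"
  show "JJ p < n" using p by (rule JJ_lt)
  show "argmax_set (mk_head (e cONE) (\<lambda>_. 0) (\<lambda>j. - 1 * e cA j + 3 * e D j) (\<lambda>_. 0) (\<lambda>r j. cpyb 1 4 r j + cpyb 3 5 r j) (0, - 10)) (XS n st5) p = {JJ p}"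
    using argmax_hJ[of st5 p "\<lambda>r j. cpyb 1 4 r j + cpyb 3 5 r j"] p unfolding hJ_def by (simp add: st5_def cc_def)
next
  fix i k assume "i < n" "k < dm"
  show "st5 i k + (\<Sum>j<dm. (cpyb 1 4 k j + cpyb 3 5 k j) * st5 (JJ i) j) = st5a i k"
    by (simp add: st5_def st5a_def O1_def O2_def) (simp add: mkst_def)
next
  fix i k assume "i < n" "k < dm"
  show "(\<Sum>j<dm. Mout k j * st5a i j) = st6 i k"
    by (simp add: Mout_def st5a_def st6_def) (simp add: mkst_def)
qed


definition "ev u t = (if t < D then enc u ! t else 0)"
definition "lefts i = rev (filter (\<lambda>u. u \<noteq> None) (take (i - 1) w))"

lemma v_ev: "v k = (if 1 \<le> k \<and> k \<le> N then ev (w ! (k - 1)) else ev None)"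
  by (auto simp: v_def vin_def ev_def enc_None fun_eq_iff)

lemma cc_iff: "cc j = 1 \<longleftrightarrow> (2 \<le> j \<and> j - 1 \<le> N \<and> w ! (j - 2) \<noteq> None)"
proof -
  have "cc j = v (j - 1) 0" by (simp add: cc_def Dd_def)
  also have "\<dots> = (if 1 \<le> j - 1 \<and> j - 1 \<le> N then ev (w ! (j - 1 - 1)) 0 else ev None 0)" by (simp add: v_ev)
  finally have c: "cc j = \<dots>" .
  show ?thesis
  proof (cases "1 \<le> j - 1 \<and> j - 1 \<le> N")
    case True
    then have m: "w ! (j - 2) \<in> set w" by (intro nth_mem) auto
    have "j - 1 - 1 = j - 2" by simp
    then show ?thesis using c True enc_some0[OF m] by (cases "w ! (j - 2)") (auto simp: ev_def enc_None)
  next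
    case False
    then show ?thesis using c by (auto simp: ev_def enc_None)
  qed
qed

lemma lefts_none:
  assumes "\<And>m. 1 \<le> m \<Longrightarrow> m \<le> i - 1 \<Longrightarrow> m \<le> N \<Longrightarrow> w ! (m - 1) = None"
  shows "lefts i = []"
proof -
  have "\<forall>y\<in>set (take (i - 1) w). y = None"
  proof
    fix y assume "y \<in> set (take (i - 1) w)"
    then obtain idx where idx: "idx < length (take (i - 1) w)" "y = take (i - 1) w ! idx"
      by (auto simp: in_set_conv_nth)
    then have "y = w ! (Suc idx - 1)" "Suc idx \<le> i - 1" "Suc idx \<le> N" by auto
    then show "y = None" using assms[of "Suc idx"] by simp
  qed
  then show ?thesis by (simp add: lefts_def filter_empty_conv)
qed

lemma lefts_split:
  assumes "1 \<le> k" "k < i" "i - 1 \<le> N" "w ! (k - 1) \<noteq> None"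
    and "\<And>m. k < m \<Longrightarrow> m \<le> i - 1 \<Longrightarrow> w ! (m - 1) = None"
  shows "lefts i = w ! (k - 1) # lefts k"
proof -
  have kN: "k - 1 < N" using assms by simp
  have t1: "take (i - 1) w = take k w @ take (i - 1 - k) (drop k w)"
    using take_add[of k "i - 1 - k" w] assms by simp
  have t2: "take k w = take (k - 1) w @ [w ! (k - 1)]"
    using take_Suc_conv_app_nth[OF kN] assms by simp
  have f: "filter (\<lambda>u. u \<noteq> None) (take (i - 1 - k) (drop k w)) = []"
  proof -
    have "\<forall>y\<in>set (take (i - 1 - k) (drop k w)). y = None"
    proof
      fix y assume "y \<in> set (take (i - 1 - k) (drop k w))"
      then obtain idx where idx: "idx < length (take (i - 1 - k) (drop k w))" "y = take (i - 1 - k) (drop k w) ! idx"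
        by (auto simp: in_set_conv_nth)
      then have "y = w ! (k + Suc idx - 1)" "k < k + Suc idx" "k + Suc idx \<le> i - 1" by auto
      then show "y = None" using assms(5)[of "k + Suc idx"] by simp
    qed
    then show ?thesis by (simp add: filter_empty_conv)
  qed
  have "filter (\<lambda>u. u \<noteq> None) (take (i - 1) w) = filter (\<lambda>u. u \<noteq> None) (take (k - 1) w) @ [w ! (k - 1)]"
    unfolding t1 t2 using f assms(4) by simp
  then show ?thesis unfolding lefts_def by simp
qed

lemma nth_or_none_Cons1: "nth_or_none (x # L) 1 = nth_or_none L 0"
  by (simp add: nth_or_none_def)

lemma N1_O2_ok:
  assumes "i \<le> N"
  shows "N1 i = ev (nth_or_none (lefts i) 0) \<and> O2 i = ev (nth_or_none (lefts i) 1)"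
  using assms
proof (induction i rule: less_induct)
  case (less i)
  show ?case
  proof (cases "\<exists>j\<le>i. cc j = 1")
    case True
    note J = Jf_props[OF True]
    define g where "g = JJ i"
    have g: "g \<le> i" "cc g = 1" "\<And>j. j \<le> i \<Longrightarrow> cc j = 1 \<Longrightarrow> j \<le> g"
      using J unfolding g_def JJ_def by auto
    define k where "k = g - 1"
    have cg: "2 \<le> g" "g - 1 \<le> N" "w ! (g - 2) \<noteq> None" using g(2) cc_iff[of g] by auto
    have km: "k - 1 = g - 2" by (simp add: k_def)
    have k: "1 \<le> k" "k \<le> N" "w ! (k - 1) \<noteq> None" "k < i"
      using cg g(1) km by (simp_all add: k_def)
    have rest: "\<And>m. k < m \<Longrightarrow> m \<le> i - 1 \<Longrightarrow> w ! (m - 1) = None"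
    proof (rule ccontr)
      fix m assume m: "k < m" "m \<le> i - 1" "w ! (m - 1) \<noteq> None"
      have "cc (Suc m) = 1" using m k less.prems cc_iff[of "Suc m"] by auto
      then have "Suc m \<le> g" using g(3)[of "Suc m"] m k by auto
      then show False using m k_def by simp
    qed
    have L: "lefts i = w ! (k - 1) # lefts k"
      by (rule lefts_split) (use k less.prems rest in auto)
    have IH: "N1 k = ev (nth_or_none (lefts k) 0)" using less.IH[of k] k by simp
    have "N1 i = v k" by (simp add: N1_def Dd_def g_def[symmetric] k_def)
    also have "\<dots> = ev (w ! (k - 1))" using k by (simp add: v_ev)
    finally have a: "N1 i = ev (nth_or_none (lefts i) 0)" using L by (simp add: nth_or_none_def)
    have "O2 i = N1 k" by (simp add: O2_def P_def g_def[symmetric] k_def)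
    then have b: "O2 i = ev (nth_or_none (lefts i) 1)" using IH L by (simp add: nth_or_none_def)
    show ?thesis using a b by simp
  next
    case False
    have none: "\<And>m. 1 \<le> m \<Longrightarrow> m \<le> i - 1 \<Longrightarrow> m \<le> N \<Longrightarrow> w ! (m - 1) = None"
    proof (rule ccontr)
      fix m assume m: "1 \<le> m" "m \<le> i - 1" "m \<le> N" "w ! (m - 1) \<noteq> None"
      have "cc (Suc m) = 1" using m cc_iff[of "Suc m"] by auto
      then show False using False m by auto
    qed
    have gi: "JJ i = i" using False by (auto simp: JJ_def Jf_def)
    have L: "lefts i = []" by (rule lefts_none) (use none in auto)
    have L2: "lefts (i - 1) = []" by (rule lefts_none) (use none in auto)
    have a: "N1 i = ev None"
    proof -
      have "N1 i = v (i - 1)" by (simp add: N1_def Dd_def gi)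
      also have "\<dots> = ev None" using none[of "i - 1"] by (simp add: v_ev)
      finally show ?thesis .
    qed
    have b: "O2 i = ev None"
    proof -
      have "O2 i = N1 (i - 1)" by (simp add: O2_def P_def gi)
      then show ?thesis
      proof (cases i)
        case 0 then show ?thesis using \<open>O2 i = N1 (i - 1)\<close> a by simp
      next
        case (Suc i')
        then show ?thesis using \<open>O2 i = N1 (i - 1)\<close> less.IH[of "i - 1"] less.prems L2
          by (simp add: nth_or_none_def)
      qed
    qed
    show ?thesis using a b L by (simp add: nth_or_none_def)
  qed
qed


lemma fold_LayZ: "fold apply_layer (replicate k LayZ) (XS m st) = XS m st"
  by (induction k) (simp_all add: layZ_id)

lemma run_FL: "run_tf FL (map (\<lambda>a. pad dm (enc a)) w) = XS n st6"
proof -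
  have "run_tf FL (map (\<lambda>a. pad dm (enc a)) w) = fold apply_layer (replicate 5 LayZ)
     (apply_layer Lay6 (apply_layer Lay5 (apply_layer Lay4 (apply_layer Lay3 (apply_layer Lay2 (apply_layer Lay1 (XS n st0)))))))"
    by (simp add: run_tf_def FL_def X0[unfolded FL_def, simplified])
  also have "\<dots> = XS n st6"
    by (simp only: step1 step2 step3 step4 step5 step6 fold_LayZ)
  finally show ?thesis .
qed

lemma enc_len_nth: "length (enc (nth_or_none (lefts i) j)) = D"
proof (cases "j < length (lefts i)")
  case True
  then have "lefts i ! j \<in> set (lefts i)" by simp
  then have "lefts i ! j \<in> set w" by (auto simp: lefts_def dest: in_set_takeD)
  then show ?thesis using True by (simp add: nth_or_none_def enc_len)
qed (simp add: nth_or_none_def enc_None)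

lemma left_ok:
  assumes "p < N"
  shows "run_tf FL (map (\<lambda>a. pad dm (enc a)) w) ! Suc p = pad dm (enc_pair enc enc (nearest_left2 w ! p))"
proof -
  define i where "i = Suc p"
  have i: "i \<le> N" "i < n" using assms by (simp_all add: i_def n_def)
  define u1 where "u1 = nth_or_none (lefts i) 0"
  define u2 where "u2 = nth_or_none (lefts i) 1"
  have nl: "nearest_left2 w ! p = (u1, u2)"
    using assms by (simp add: nearest_left2_def u1_def u2_def lefts_def i_def Let_def)
  have ok: "O1 i = ev u1" "O2 i = ev u2"
    using N1_O2_ok[OF i(1)] by (simp_all add: O1_def N1_def[symmetric] u1_def u2_def)
  have l1: "length (enc u1) = D" and l2: "length (enc u2) = D" by (simp_all add: u1_def u2_def enc_len_nth)
  have dd: "2 * D \<le> dm" by (simp add: dm_def)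
  have "vec_of dm (st6 i) = pad dm (enc u1 @ enc u2)"
  proof (rule nth_equalityI)
    show "length (vec_of dm (st6 i)) = length (pad dm (enc u1 @ enc u2))"
      using l1 l2 dd by (simp add: pad_def)
  next
    fix k assume "k < length (vec_of dm (st6 i))"
    then have k: "k < dm" by simp
    show "vec_of dm (st6 i) ! k = pad dm (enc u1 @ enc u2) ! k"
      using k l1 l2 dd
      by (simp add: st6_def mkst_def blkv_def scal_def cdefs ok ev_def pad_def nth_append) linarith
  qed
  then show ?thesis
    using i by (simp add: run_FL XS_nth enc_pair_def nl i_def[symmetric])
qed


definition "bq j = v j 0"
definition "KK = Kf bq n"
definition "R1 i = v (KK i)"
definition "rst2 i = mkst (v i) z (R1 i) z z z (if i = 0 then 1 else 0) 1 (aa i) 0 0"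
definition "rO1 i = v (KK i)"
definition "rO2 i = R1 (KK i)"
definition "rst2a i = mkst (v i) z (R1 i) z (rO1 i) (rO2 i) (if i = 0 then 1 else 0) 1 (aa i) 0 0"
definition "rst3 i = mkst (rO1 i) (rO2 i) z z z z 0 0 0 0 0"

lemma KK_lt: "p < n \<Longrightarrow> KK p < n" by (simp add: KK_def Kf_lt)

lemma argmax_hR:
  assumes "\<And>i. st i cA = aa i" "\<And>i. st i cONE = 1" "\<And>i. st i cS = (if i = 0 then 1 else 0)" "\<And>i. st i 0 = bq i" "p < n"
  shows "argmax_set (hR vf) (XS n st) p = {KK p}"
proof (rule argmax_st)
  show "KK p < n" using assms KK_lt by simp
  have sc: "score (hR vf) (XS n st) p q = aa q + 3 * bq q + 5 * (if q = 0 then 1 else 0) + 100 * ((if p = 0 then 1 else 0) * (if q = 0 then 1 else 0))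
           + 10 * (if q > p then 1 else 0)" if "q < n" for q
  proof -
    have "score (hR vf) (XS n st) p q = 1 * (1 * aa q + 3 * bq q + 5 * (if q = 0 then 1 else 0)) + (if p = 0 then 1 else 0) * (100 * (if q = 0 then 1 else 0))
        + 0 * (real q - real p) + 10 * (if q > p then 1 else 0)"
      using that assms by (simp only: hR_def score_st sum_lin3 sum_lin1 sum_e c_lt) simp
    then show ?thesis by simp
  qed
  fix q assume q: "q < n" "q \<noteq> KK p"
  have b01: "\<And>q. bq q = 0 \<or> bq q = 1" by (simp add: bq_def v01)
  have b0: "bq 0 = 0" by (simp add: bq_def)
  show "score (hR vf) (XS n st) p q < score (hR vf) (XS n st) p (KK p)"
    using K_max[of bq, OF b01 b0 assms(5) q(1)] q sc KK_lt[OF assms(5)] by (simp add: KK_def)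
qed

lemma rstep2: "apply_layer RLay2 (XS n st1) = XS n rst2"
  unfolding RLay2_def hR_def
proof (rule step_zero[where tg="KK"])
  fix p assume p: "p < n"
  show "KK p < n" using p by (rule KK_lt)
  show "argmax_set (mk_head (e cONE) (e cS) (\<lambda>j. 1 * e cA j + 3 * e 0 j + 5 * e cS j) (\<lambda>j. 100 * e cS j) (cpyb 0 2) (0, 10)) (XS n st1) p = {KK p}"
    using argmax_hR[of st1 p "cpyb 0 2"] p unfolding hR_def by (simp add: st1_def bq_def mkst_read(1))
next
  fix i k assume "i < n" "k < dm"
  show "st1 i k + (\<Sum>j<dm. cpyb 0 2 k j * st1 (KK i) j) = rst2 i k"
    by (simp add: st1_def rst2_def R1_def) (simp add: mkst_def)
qed

lemma rstep3: "apply_layer RLay3 (XS n rst2) = XS n rst3"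
  unfolding RLay3_def hR_def
proof (rule step_lin[where tg="KK" and sa=rst2a])
  fix p assume p: "p < n"
  show "KK p < n" using p by (rule KK_lt)
  show "argmax_set (mk_head (e cONE) (e cS) (\<lambda>j. 1 * e cA j + 3 * e 0 j + 5 * e cS j) (\<lambda>j. 100 * e cS j) (\<lambda>r j. cpyb 0 4 r j + cpyb 2 5 r j) (0, 10)) (XS n rst2) p = {KK p}"
    using argmax_hR[of rst2 p "\<lambda>r j. cpyb 0 4 r j + cpyb 2 5 r j"] p unfolding hR_def by (simp add: rst2_def bq_def mkst_read(1))
next
  fix i k assume "i < n" "k < dm"
  show "rst2 i k + (\<Sum>j<dm. (cpyb 0 4 k j + cpyb 2 5 k j) * rst2 (KK i) j) = rst2a i k"
    by (simp add: rst2_def rst2a_def rO1_def rO2_def) (simp add: mkst_def)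
next
  fix i k assume "i < n" "k < dm"
  show "(\<Sum>j<dm. Mout k j * rst2a i j) = rst3 i k"
    by (simp add: Mout_def rst2a_def rst3_def) (simp add: mkst_def)
qed


definition "rights i = filter (\<lambda>u. u \<noteq> None) (drop i w)"

lemma bq_iff: "bq j = 1 \<longleftrightarrow> (1 \<le> j \<and> j \<le> N \<and> w ! (j - 1) \<noteq> None)"
proof -
  have c: "bq j = (if 1 \<le> j \<and> j \<le> N then ev (w ! (j - 1)) 0 else ev None 0)" by (simp add: bq_def v_ev)
  show ?thesis
  proof (cases "1 \<le> j \<and> j \<le> N")
    case True
    then have m: "w ! (j - 1) \<in> set w" by (intro nth_mem) auto
    show ?thesis using c True enc_some0[OF m]
      by (cases "w ! (j - 1)") (simp_all add: ev_def enc_None)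
  next
    case False
    have "bq j = ev None 0" using c by (simp only: if_not_P[OF False])
    then have "bq j = 0" by (simp add: ev_def enc_None)
    then show ?thesis using False by auto
  qed
qed

lemma rights_none:
  assumes "\<And>m. i < m \<Longrightarrow> m \<le> N \<Longrightarrow> w ! (m - 1) = None"
  shows "rights i = []"
proof -
  have "\<forall>y\<in>set (drop i w). y = None"
  proof
    fix y assume "y \<in> set (drop i w)"
    then obtain idx where idx: "idx < length (drop i w)" "y = drop i w ! idx"
      by (auto simp: in_set_conv_nth)
    then have "y = w ! (Suc (i + idx) - 1)" "i < Suc (i + idx)" "Suc (i + idx) \<le> N" by auto
    then show "y = None" using assms[of "Suc (i + idx)"] by simp
  qed
  then show ?thesis by (simp add: rights_def filter_empty_conv)
qed

lemma rights_split:
  assumes "i < k" "k \<le> N" "w ! (k - 1) \<noteq> None"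
    and "\<And>m. i < m \<Longrightarrow> m < k \<Longrightarrow> w ! (m - 1) = None"
  shows "rights i = w ! (k - 1) # rights k"
proof -
  have kN: "k - 1 < N" using assms by simp
  have d1: "drop i w = take (k - 1 - i) (drop i w) @ drop (k - 1) w"
    using append_take_drop_id[of "k - 1 - i" "drop i w"] assms by simp
  have d2: "drop (k - 1) w = w ! (k - 1) # drop k w"
    using Cons_nth_drop_Suc[OF kN] assms by simp
  have f: "filter (\<lambda>u. u \<noteq> None) (take (k - 1 - i) (drop i w)) = []"
  proof -
    have "\<forall>y\<in>set (take (k - 1 - i) (drop i w)). y = None"
    proof
      fix y assume "y \<in> set (take (k - 1 - i) (drop i w))"
      then obtain idx where idx: "idx < length (take (k - 1 - i) (drop i w))" "y = take (k - 1 - i) (drop i w) ! idx"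
        by (auto simp: in_set_conv_nth)
      then have "y = w ! (Suc (i + idx) - 1)" "i < Suc (i + idx)" "Suc (i + idx) < k" by auto
      then show "y = None" using assms(4)[of "Suc (i + idx)"] by simp
    qed
    then show ?thesis by (simp add: filter_empty_conv)
  qed
  have "filter (\<lambda>u. u \<noteq> None) (drop i w) = filter (\<lambda>u. u \<noteq> None) (take (k - 1 - i) (drop i w)) @ filter (\<lambda>u. u \<noteq> None) (drop (k - 1) w)"
    by (subst d1) (rule filter_append)
  also have "\<dots> = filter (\<lambda>u. u \<noteq> None) (drop (k - 1) w)" by (simp only: f append_Nil)
  also have "\<dots> = w ! (k - 1) # filter (\<lambda>u. u \<noteq> None) (drop k w)" using assms(3) by (simp only: d2) simp
  finally have "filter (\<lambda>u. u \<noteq> None) (drop i w) = w ! (k - 1) # filter (\<lambda>u. u \<noteq> None) (drop k w)" .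
  then show ?thesis unfolding rights_def .
qed

lemma KK0: "KK 0 = 0" by (simp add: KK_def Kf_def)

lemma R1_ok:
  assumes "1 \<le> i" "i \<le> N"
  shows "R1 i = ev (nth_or_none (rights i) 0) \<and>
     (\<not> (\<exists>j. i < j \<and> j < n \<and> bq j = 1) \<longrightarrow> rights i = [] \<and> (KK i = Suc i \<or> KK i = 0)) \<and>
     ((\<exists>j. i < j \<and> j < n \<and> bq j = 1) \<longrightarrow> (1 \<le> KK i \<and> KK i \<le> N \<and> rights i = w ! (KK i - 1) # rights (KK i)))"
proof (cases "\<exists>j. i < j \<and> j < n \<and> bq j = 1")
  case True
  have i0: "i \<noteq> 0" using assms by simp
  note K = Kf_props[OF True i0]
  define k where "k = KK i"
  have k: "i < k" "k < n" "bq k = 1" "\<And>j. i < j \<Longrightarrow> j < n \<Longrightarrow> bq j = 1 \<Longrightarrow> k \<le> j"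
    using K by (auto simp: k_def KK_def)
  have kk: "1 \<le> k" "k \<le> N" "w ! (k - 1) \<noteq> None" using k(3) bq_iff by auto
  have rest: "\<And>m. i < m \<Longrightarrow> m < k \<Longrightarrow> w ! (m - 1) = None"
  proof (rule ccontr)
    fix m assume m: "i < m" "m < k" "w ! (m - 1) \<noteq> None"
    have "bq m = 1" using m kk bq_iff[of m] by auto
    then have "k \<le> m" using k(4)[of m] m k(2) by auto
    then show False using m by simp
  qed
  have L: "rights i = w ! (k - 1) # rights k" by (rule rights_split) (use k kk rest in auto)
  have "R1 i = v k" by (simp add: R1_def k_def)
  also have "\<dots> = ev (w ! (k - 1))" using kk by (simp add: v_ev)
  finally show ?thesis using True L kk by (simp add: nth_or_none_def k_def)
next
  case False
  have none: "\<And>m. i < m \<Longrightarrow> m \<le> N \<Longrightarrow> w ! (m - 1) = None"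
  proof (rule ccontr)
    fix m assume m: "i < m" "m \<le> N" "w ! (m - 1) \<noteq> None"
    have "bq m = 1" using m bq_iff[of m] assms by auto
    then show False using False m by (auto simp: n_def)
  qed
  have L: "rights i = []" by (rule rights_none) (use none in auto)
  have kk: "KK i = (if Suc i < n then Suc i else 0)" using False assms by (auto simp: KK_def Kf_def)
  have "R1 i = ev None"
  proof (cases "Suc i < n")
    case True
    then have "R1 i = v (Suc i)" by (simp add: R1_def kk)
    also have "\<dots> = ev None" using none[of "Suc i"] True by (simp add: v_ev n_def)
    finally show ?thesis .
  next
    case F: False
    then show ?thesis by (simp add: R1_def kk v_ev)
  qed
  then show ?thesis using False L kk by (simp add: nth_or_none_def)
qed

lemma rO_ok:
  assumes "1 \<le> i" "i \<le> N"
  shows "rO1 i = ev (nth_or_none (rights i) 0) \<and> rO2 i = ev (nth_or_none (rights i) 1)"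
proof -
  have a: "rO1 i = ev (nth_or_none (rights i) 0)" using R1_ok[OF assms] by (simp add: rO1_def R1_def)
  have b: "rO2 i = ev (nth_or_none (rights i) 1)"
  proof (cases "\<exists>j. i < j \<and> j < n \<and> bq j = 1")
    case True
    then have k: "1 \<le> KK i" "KK i \<le> N" "rights i = w ! (KK i - 1) # rights (KK i)" using R1_ok[OF assms] by auto
    have "rO2 i = R1 (KK i)" by (simp add: rO2_def)
    also have "\<dots> = ev (nth_or_none (rights (KK i)) 0)" using R1_ok[OF k(1,2)] by simp
    finally show ?thesis using k(3) by (simp add: nth_or_none_def)
  next
    case False
    then have r: "rights i = []" "KK i = Suc i \<or> KK i = 0" using R1_ok[OF assms] by auto
    show ?thesis
    proof (cases "KK i = 0")
      case True
      then show ?thesis using r by (simp add: rO2_def R1_def KK0 v_ev nth_or_none_def)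
    next
      case F: False
      then have ks: "KK i = Suc i" using r by auto
      have "Suc i < n" using KK_lt[of i] assms ks by (simp add: n_def)
      then have si: "1 \<le> Suc i" "Suc i \<le> N" by (auto simp: n_def)
      have "rights (Suc i) = []"
      proof -
        have "rights i = filter (\<lambda>u. u \<noteq> None) (drop i w)" by (simp add: rights_def)
        moreover have "drop i w = w ! i # drop (Suc i) w" using si by (simp add: Cons_nth_drop_Suc)
        ultimately show ?thesis using r(1) by (auto simp: rights_def split: if_splits)
      qed
      then show ?thesis using R1_ok[OF si] ks r(1) by (simp add: rO2_def nth_or_none_def)
    qed
  qed
  show ?thesis using a b by simp
qed

lemma run_FR: "run_tf FR (map (\<lambda>a. pad dm (enc a)) w) = XS n rst3"
proof -
  have s0: "start FR = start FL" by (simp add: FR_def FL_def)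
  have "run_tf FR (map (\<lambda>a. pad dm (enc a)) w) = fold apply_layer (replicate 8 LayZ)
     (apply_layer RLay3 (apply_layer RLay2 (apply_layer Lay1 (XS n st0))))"
    by (simp add: run_tf_def FR_def X0[unfolded FL_def, simplified])
  also have "\<dots> = XS n rst3"
    by (simp only: step1 rstep2 rstep3 fold_LayZ)
  finally show ?thesis .
qed

lemma enc_len_nth_r: "length (enc (nth_or_none (rights i) j)) = D"
proof (cases "j < length (rights i)")
  case True
  then have "rights i ! j \<in> set (rights i)" by simp
  then have "rights i ! j \<in> set w" by (auto simp: rights_def dest: in_set_dropD)
  then show ?thesis using True by (simp add: nth_or_none_def enc_len)
qed (simp add: nth_or_none_def enc_None)

lemma right_ok:
  assumes "p < N"
  shows "run_tf FR (map (\<lambda>a. pad dm (enc a)) w) ! Suc p = pad dm (enc_pair enc enc (nearest_right2 w ! p))"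
proof -
  define i where "i = Suc p"
  have i: "1 \<le> i" "i \<le> N" "i < n" using assms by (simp_all add: i_def n_def)
  define u1 where "u1 = nth_or_none (rights i) 0"
  define u2 where "u2 = nth_or_none (rights i) 1"
  have nl: "nearest_right2 w ! p = (u1, u2)"
    using assms by (simp add: nearest_right2_def u1_def u2_def rights_def i_def Let_def)
  have ok: "rO1 i = ev u1" "rO2 i = ev u2"
    using rO_ok[OF i(1,2)] by (simp_all add: u1_def u2_def)
  have l1: "length (enc u1) = D" and l2: "length (enc u2) = D" by (simp_all add: u1_def u2_def enc_len_nth_r)
  have dd: "2 * D \<le> dm" by (simp add: dm_def)
  have "vec_of dm (rst3 i) = pad dm (enc u1 @ enc u2)"
  proof (rule nth_equalityI)
    show "length (vec_of dm (rst3 i)) = length (pad dm (enc u1 @ enc u2))"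
      using l1 l2 dd by (simp add: pad_def)
  next
    fix k assume "k < length (vec_of dm (rst3 i))"
    then have k: "k < dm" by simp
    show "vec_of dm (rst3 i) ! k = pad dm (enc u1 @ enc u2) ! k"
      using k l1 l2 dd
      by (simp add: rst3_def mkst_def blkv_def scal_def cdefs ok ev_def pad_def nth_append) linarith
  qed
  then show ?thesis
    using i by (simp add: run_FR XS_nth enc_pair_def nl i_def[symmetric])
qed


end

lemma tfw_inst:
  assumes "local_type S d \<phi>" "set xs \<subseteq> opt_set S"
  shows "tfw d (enc_opt d \<phi>) xs"
proof
  fix u assume u: "u \<in> set xs"
  then have "u = None \<or> (\<exists>t\<in>S. u = Some t)" using assms(2) by (auto simp: opt_set_def)
  then show "length (enc_opt d \<phi> u) = tfc.D d"
    using assms(1) by (auto simp: enc_opt_def tfc.D_def local_type_def)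
  show "u \<noteq> None \<Longrightarrow> enc_opt d \<phi> u ! 0 = 1" by (auto simp: enc_opt_def)
next
  show "enc_opt d \<phi> None = replicate (tfc.D d) 0" by (simp add: enc_opt_def tfc.D_def)
qed

theorem proposition16:
  shows "\<exists>C::nat. \<forall>(S::nat set) (d::nat) (\<phi>::nat \<Rightarrow> real list). local_type S d \<phi> \<longrightarrow>
     representable (C * (d + 1)) C C (opt_set S) (enc_opt d \<phi>)
        (enc_pair (enc_opt d \<phi>) (enc_opt d \<phi>)) nearest_left2
   \<and> representable (C * (d + 1)) C C (opt_set S) (enc_opt d \<phi>)
        (enc_pair (enc_opt d \<phi>) (enc_opt d \<phi>)) nearest_right2"
proof (intro exI[of _ 11] allI impI conjI)
  fix S :: "nat set" and d :: nat and \<phi> :: "nat \<Rightarrow> real list"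
  assume lt: "local_type S d \<phi>"
  have dm: "11 * (d + 1) = tfc.dm d" by (simp add: tfc.dm_def tfc.D_def)
  show "representable (11 * (d + 1)) 11 11 (opt_set S) (enc_opt d \<phi>)
        (enc_pair (enc_opt d \<phi>) (enc_opt d \<phi>)) nearest_left2"
    unfolding representable_def dm
  proof (rule bexI[of _ "tfc.FL d"], intro allI impI)
    fix xs :: "nat option list" and p assume xs: "set xs \<subseteq> opt_set S" and p: "p < length xs"
    interpret T: tfw d "enc_opt d \<phi>" xs by (rule tfw_inst[OF lt xs])
    show "run_tf (tfc.FL d) (map (\<lambda>a. pad (tfc.dm d) (enc_opt d \<phi> a)) xs) ! Suc p =
        pad (tfc.dm d) (enc_pair (enc_opt d \<phi>) (enc_opt d \<phi>) (nearest_left2 xs ! p))"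
      by (rule T.left_ok[OF p])
  qed (rule tfc.FL_TF)
  show "representable (11 * (d + 1)) 11 11 (opt_set S) (enc_opt d \<phi>)
        (enc_pair (enc_opt d \<phi>) (enc_opt d \<phi>)) nearest_right2"
    unfolding representable_def dm
  proof (rule bexI[of _ "tfc.FR d"], intro allI impI)
    fix xs :: "nat option list" and p assume xs: "set xs \<subseteq> opt_set S" and p: "p < length xs"
    interpret T: tfw d "enc_opt d \<phi>" xs by (rule tfw_inst[OF lt xs])
    show "run_tf (tfc.FR d) (map (\<lambda>a. pad (tfc.dm d) (enc_opt d \<phi> a)) xs) ! Suc p =
        pad (tfc.dm d) (enc_pair (enc_opt d \<phi>) (enc_opt d \<phi>) (nearest_right2 xs ! p))"
      by (rule T.right_ok[OF p])
  qed (rule tfc.FR_TF)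
qed


end
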